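(* Let $p_n=P_n^{(\alpha_n,\beta_n)}$ be Jacobi polynomials (of degree $n$) with complex parameters. Suppose the root-counting measures $\mu_n$ of $p_n$ converge weakly to a compactly supported measure $\mu$ and the root-counting measures $\mu_n'$ of $p_n'$ converge weakly to a compactly supported measure $\mu'$. Then one of the following holds: (i) the sequences $\{(\alpha_n+\beta_n)/n\}$ and $\{(\beta_n-\alpha_n)/n\}$ (hence $\{\alpha_n/n\}$ and $\{\beta_n/n\}$) are bounded; (ii) $\{(\alpha_n+\beta_n)/n\}$ is unbounded and $\{(\beta_n-\alpha_n)/n\}$ is bounded, in which case $\mu_n\to\delta_0$ (equivalently $\mathcal C_\mu(z)=1/z$); (iii) both $\{(\alpha_n+\beta_n)/n\}$ and $\{(\beta_n-\alpha_n)/n\}$ are unbounded, in which case there exist $\kappa\in\mathbb C$ and a subsequence $\{n_m\}$ with $\lim_{m\to\infty}\frac{\beta_{n_m}-\alpha_{n_m}}{\alpha_{n_m}+\beta_{n_m}}=\kappa$ and $\mu_{n_m}\to\delta_\kappa$ weakly.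
   Context: $P_n^{(\alpha,\beta)}(z)=2^{-n}\sum_{k=0}^n\binom{n+\alpha}{n-k}\binom{n+\beta}{k}(z-1)^k(z+1)^{n-k}$ with $\binom{\gamma}{k}=\gamma(\gamma-1)\cdots(\gamma-k+1)/k!$; it satisfies $(1-z^2)y''+(\beta-\alpha-(\alpha+\beta+2)z)y'+n(n+\alpha+\beta+1)y=0$. Root-counting measure: $\frac1n\sum\delta_{\xi_i}$ over the roots. $\mathcal C_\mu(z)=\int\frac{d\mu(\xi)}{z-\xi}$; $\delta_\kappa$ is the unit point mass at $\kappa$. *)

theory Defs
  imports "HOL-Probability.Probability" "HOL-Computational_Algebra.Polynomial"
begin

definition jacobi :: "nat \<Rightarrow> complex \<Rightarrow> complex \<Rightarrow> complex poly" where
  "jacobi n a b = smult (1 / 2 ^ n)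
     (\<Sum>k = 0..n. smult (((of_nat n + a) gchoose (n - k)) * ((of_nat n + b) gchoose k))
                     ([:-1, 1:] ^ k * [:1, 1:] ^ (n - k)))"

text \<open>Integral of f against the root-counting measure (1/deg p) sum_i delta_(xi_i)
  of p (roots counted with multiplicity).\<close>
definition root_integral :: "complex poly \<Rightarrow> (complex \<Rightarrow> real) \<Rightarrow> real" where
  "root_integral p f =
     (\<Sum>\<xi>\<in>{\<xi>. poly p \<xi> = 0}. real (order \<xi> p) * f \<xi>) / real (degree p)"

definition roots_weak_conv :: "(nat \<Rightarrow> complex poly) \<Rightarrow> complex measure \<Rightarrow> bool" where
  "roots_weak_conv p \<mu> \<longleftrightarrow>
     (\<forall>f :: complex \<Rightarrow> real. continuous_on UNIV f \<and> bounded (range f) \<longrightarrow>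
        (\<lambda>n. root_integral (p n) f) \<longlonglongrightarrow> integral\<^sup>L \<mu> f)"

definition compactly_supported :: "complex measure \<Rightarrow> bool" where
  "compactly_supported \<mu> \<longleftrightarrow> sets \<mu> = sets borel \<and> finite_measure \<mu> \<and>
     (\<exists>K. compact K \<and> emeasure \<mu> (UNIV - K) = 0)"

end

theory Submission
  imports Defs "HOL-Computational_Algebra.Fundamental_Theorem_Algebra"
begin


definition UU :: "complex poly" where "UU = [:-1,1:]"
definition VV :: "complex poly" where "VV = [:1,1:]"

definition Lop :: "nat \<Rightarrow> complex \<Rightarrow> complex \<Rightarrow> complex poly \<Rightarrow> complex poly" where
  "Lop n a b y = - (UU* VV* pderiv (pderiv y)) - (([:a:]+1) * VV + ([:b:]+1) * UU) * pderiv y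
      + [:of_nat n * (of_nat n + a + b + 1):] * y"

lemma smult_as: "smult c p = [:c:] * p" by simp

lemma Lop_smult: "Lop n a b (smult c y) = smult c (Lop n a b y)"
  unfolding Lop_def pderiv_smult unfolding smult_as by algebra

lemma pderiv_sum': "pderiv (sum f A) = (\<Sum>x\<in>A. pderiv (f x))"
  using higher_pderiv_sum[of 1 f A] by simp

lemma Lop_sum: "Lop n a b (sum f A) = (\<Sum>x\<in>A. Lop n a b (f x))"
  unfolding Lop_def pderiv_sum' by (simp add: sum_distrib_left sum_subtractf sum.distrib sum_negf)

lemma pderiv_UU [simp]: "pderiv UU = 1" by (simp add: UU_def pderiv_pCons)
lemma pderiv_VV [simp]: "pderiv VV = 1" by (simp add: VV_def pderiv_pCons)

lemma UU_pow_deriv: "UU * pderiv (UU^i) = of_nat i * UU^i"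
proof (cases i)
  case (Suc m)
  show ?thesis unfolding Suc pderiv_power_Suc pderiv_UU
    by (simp only: smult_as of_nat_poly[symmetric] power_Suc) (simp add: algebra_simps)
qed simp
lemma VV_pow_deriv: "VV * pderiv (VV^i) = of_nat i * VV^i"
proof (cases i)
  case (Suc m)
  show ?thesis unfolding Suc pderiv_power_Suc pderiv_VV
    by (simp only: smult_as of_nat_poly[symmetric] power_Suc) (simp add: algebra_simps)
qed simp

lemma F1: "UU* VV* pderiv (UU^i* VV^j) = (of_nat i* VV + of_nat j* UU) * (UU^i* VV^j)"
proof -
  have "UU* VV* pderiv (UU^i* VV^j) = UU^i*(VV* pderiv(VV^j))* UU + VV^j*(UU* pderiv(UU^i))* VV"
    by (simp add: pderiv_mult algebra_simps)
  also have "\<dots> = (of_nat i* VV + of_nat j* UU) * (UU^i* VV^j)"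
    by (simp add: UU_pow_deriv VV_pow_deriv algebra_simps)
  finally show ?thesis .
qed

lemma F2: "UU* VV* pderiv (pderiv (UU^i* VV^j)) = (of_nat i + of_nat j)*(UU^i* VV^j)
   + (of_nat i* VV + of_nat j* UU - UU - VV) * pderiv (UU^i* VV^j)"
proof -
  have "pderiv (UU* VV* pderiv (UU^i* VV^j)) = pderiv ((of_nat i* VV + of_nat j* UU) * (UU^i* VV^j))"
    by (simp only: F1)
  hence "(UU+VV)* pderiv (UU^i* VV^j) + UU* VV* pderiv (pderiv (UU^i* VV^j))
     = (of_nat i + of_nat j)*(UU^i* VV^j) + (of_nat i* VV + of_nat j* UU) * pderiv (UU^i* VV^j)"
    by (simp add: pderiv_mult pderiv_add algebra_simps)
  thus ?thesis by (simp add: algebra_simps)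
qed

lemma gen_ring:
  fixes pu pv pT pd pdd a b K i j :: "complex poly"
  assumes h1: "pu * pv * pd = (i * pv+j * pu) * pT" and h2: "pu * pv * pdd = (i+j) * pT + (i * pv+j * pu-pu-pv) * pd"
  shows "pu * pv * (-(pu * pv * pdd) - ((a+1) * pv+(b+1) * pu) * pd + K * pT)
     = (-(i * (i+a)) * pv^2 - j * (j+b) * pu^2 + (K - 2 * i * j - (a+1) * j - (b+1) * i) * pu * pv) * pT"
proof -
  have "pu * pv * (-(pu * pv * pdd) - ((a+1) * pv+(b+1) * pu) * pd + K * pT)
     = -(pu * pv * (pu * pv * pdd)) - ((a+1) * pv+(b+1) * pu) * (pu * pv * pd) + K * pu * pv * pT"
    by (simp add: algebra_simps)
  also have "pu * pv * (pu * pv * pdd) = pu * pv * ((i+j) * pT) + (i * pv+j * pu-pu-pv) * (pu * pv * pd)"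
    unfolding h2 by (simp add: algebra_simps)
  finally show ?thesis unfolding h1 by (simp add: algebra_simps power2_eq_square)
qed

lemma LT: "UU * VV * Lop n a b (UU^i * VV^j) =
   (-(of_nat i * (of_nat i+[:a:])) * VV^2 - of_nat j * (of_nat j+[:b:]) * UU^2
     + ([:of_nat n * (of_nat n + a + b + 1):] - 2 * of_nat i * of_nat j - ([:a:]+1) * of_nat j - ([:b:]+1) * of_nat i) * UU * VV)
   * (UU^i * VV^j)"
  unfolding Lop_def by (rule gen_ring[OF F1 F2])


lemma gchoose_step: "(x gchoose (Suc k)) * of_nat (Suc k) = (x gchoose k) * (x - of_nat k)"
proof -
  have "(x gchoose (Suc k)) * of_nat (Suc k) * fact k = (x gchoose (Suc k)) * fact (Suc k)"
    by (simp add: algebra_simps)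
  also have "\<dots> = (\<Prod>i = 0..<Suc k. x - of_nat i)" by (rule gbinomial_mult_fact')
  also have "\<dots> = (\<Prod>i = 0..<k. x - of_nat i) * (x - of_nat k)" by simp
  also have "\<dots> = (x gchoose k) * (x - of_nat k) * fact k" by (simp only: gbinomial_mult_fact'[symmetric]) (simp add: algebra_simps)
  finally show ?thesis by (metis fact_nonzero mult_right_cancel)
qed

definition JC :: "nat \<Rightarrow> complex \<Rightarrow> complex \<Rightarrow> nat \<Rightarrow> complex" where
  "JC n a b k = ((of_nat n + a) gchoose (n - k)) * ((of_nat n + b) gchoose k)"
definition JX where "JX n a b k = JC n a b k * of_nat k * (of_nat k + a)"
definition JY where "JY n a b k = JC n a b k * of_nat (n-k) * (of_nat (n-k) + b)"
definition JT :: "nat \<Rightarrow> nat \<Rightarrow> complex poly" where "JT n k = UU^k * VV^(n-k)"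
definition JZ where "JZ n a b k = (if k = 0 then 0 else smult (JY n a b (k-1)) (JT n k - JT n (k-1)))"

lemma JX_JY: assumes "Suc k \<le> n" shows "JX n a b (Suc k) = JY n a b k"
proof -
  obtain m where m: "n - k = Suc m" "n - Suc k = m" using assms by (metis Suc_diff_Suc Suc_le_lessD)
  have e1: "((of_nat n + b) gchoose (Suc k)) * of_nat (Suc k) = ((of_nat n + b) gchoose k) * (of_nat n + b - of_nat k)"
    by (rule gchoose_step)
  have e2: "((of_nat n + a) gchoose (Suc m)) * of_nat (Suc m) = ((of_nat n + a) gchoose m) * (of_nat n + a - of_nat m)"
    by (rule gchoose_step)
  have nm: "of_nat n = (of_nat k + of_nat (Suc m) :: complex)" proof -
    have "n = k + Suc m" using m assms by arith
    thus ?thesis by simp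
  qed
  have "JX n a b (Suc k) = ((of_nat n + a) gchoose m) * (of_nat n + a - of_nat m) * (((of_nat n + b) gchoose (Suc k)) * of_nat (Suc k))"
    unfolding JX_def JC_def m nm by (simp add: algebra_simps)
  also have "\<dots> = ((of_nat n + a) gchoose (Suc m)) * of_nat (Suc m) * ((of_nat n + b) gchoose k) * (of_nat n + b - of_nat k)"
    unfolding e1 e2[symmetric] by (simp add: algebra_simps)
  also have "\<dots> = JY n a b k"
    unfolding JY_def JC_def m nm by (simp add: algebra_simps)
  finally show ?thesis .
qed


lemma UV_T_prev: assumes "1 \<le> k" "k \<le> n" shows "UU * VV * JT n (k-1) = VV^2 * JT n k"
proof -
  obtain k' where k: "k = Suc k'" using assms by (cases k) auto
  have e: "n - k' = Suc (n - Suc k')" using assms k by arith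
  show ?thesis unfolding JT_def k diff_Suc_1 e by (simp add: algebra_simps power2_eq_square)
qed

lemma UV_T_next: assumes "k < n" shows "UU * VV * JT n (Suc k) = UU^2 * JT n k"
proof -
  have e: "n - k = Suc (n - Suc k)" using assms by arith
  show ?thesis unfolding JT_def e by (simp add: algebra_simps power2_eq_square)
qed

lemma UUVV_nz: "UU * VV \<noteq> 0" by (simp add: UU_def VV_def)

lemma final_id:
  fixes C x y K :: complex and T :: "complex poly"
  assumes "K = x + y"
  shows "smult C (([:-x:] * VV^2 + [:-y:] * UU^2 + [:K:] * UU * VV) * T)
     = smult (C * x) ((UU * VV - VV^2) * T) - smult (C * y) ((UU^2 - UU * VV) * T)"
  using assms by (simp add: algebra_simps smult_add_right smult_diff_right smult_add_left smult_diff_left)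

lemma KEY: assumes "k \<le> n"
  shows "Lop n a b (smult (JC n a b k) (JT n k)) = JZ n a b k - JZ n a b (Suc k)"
proof -
  define x where "x = of_nat k * (of_nat k + a)"
  define y where "y = of_nat (n-k) * (of_nat (n-k) + b)"
  define K where "K = of_nat n * (of_nat n + a + b + 1) - 2 * of_nat k * of_nat (n-k) - (a+1) * of_nat (n-k) - (b+1) * of_nat k"
  have Kxy: "K = x + y"
  proof -
    have "of_nat n = (of_nat k + of_nat (n-k) :: complex)" using assms by (simp add: of_nat_diff)
    thus ?thesis unfolding K_def x_def y_def by (simp add: algebra_simps)
  qed
  have coef: "-(of_nat k * (of_nat k+[:a:])) * VV^2 - of_nat (n-k) * (of_nat (n-k)+[:b:]) * UU^2
     + ([:of_nat n * (of_nat n + a + b + 1):] - 2 * of_nat k * of_nat (n-k) - ([:a:]+1) * of_nat (n-k) - ([:b:]+1) * of_nat k) * UU * VV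
     = [:-x:] * VV^2 + [:-y:] * UU^2 + [:K:] * UU * VV"
    unfolding x_def y_def K_def by (simp add: of_nat_poly numeral_poly algebra_simps smult_add_left smult_diff_left smult_add_right smult_diff_right)
  have L: "UU * VV * Lop n a b (smult (JC n a b k) (JT n k)) = smult (JC n a b k) (([:-x:] * VV^2 + [:-y:] * UU^2 + [:K:] * UU * VV) * JT n k)"
    unfolding Lop_smult mult_smult_right LT[of n a b k "n-k", folded JT_def] coef ..
  have Z1: "UU * VV * JZ n a b k = smult (JC n a b k * x) ((UU * VV - VV^2) * JT n k)"
  proof (cases k)
    case 0 thus ?thesis by (simp add: JZ_def x_def)
  next
    case (Suc k')
    have "JY n a b k' = JC n a b k * x" using JX_JY[of k' n a b] assms Suc by (simp add: JX_def x_def mult.assoc)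
    moreover have "UU * VV * JT n k' = VV^2 * JT n k" using UV_T_prev[of k n] assms Suc by simp
    ultimately show ?thesis unfolding JZ_def using Suc by (simp add: algebra_simps)
  qed
  have Z2: "UU * VV * JZ n a b (Suc k) = smult (JC n a b k * y) ((UU^2 - UU * VV) * JT n k)"
  proof (cases "k = n")
    case True thus ?thesis by (simp add: JZ_def JY_def y_def)
  next
    case False
    hence "UU * VV * JT n (Suc k) = UU^2 * JT n k" using UV_T_next assms by simp
    thus ?thesis unfolding JZ_def by (simp add: JY_def y_def algebra_simps)
  qed
  have "UU * VV * Lop n a b (smult (JC n a b k) (JT n k)) = UU * VV * (JZ n a b k - JZ n a b (Suc k))"
    unfolding L right_diff_distrib Z1 Z2 by (rule final_id[OF Kxy])
  thus ?thesis using UUVV_nz by simp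
qed


lemma jacobi_alt: "jacobi n a b = smult (1 / 2 ^ n) (\<Sum>k\<le>n. smult (JC n a b k) (JT n k))"
  unfolding jacobi_def JC_def JT_def UU_def VV_def atLeast0AtMost ..

lemma Lop_jacobi: "Lop n a b (jacobi n a b) = 0"
proof -
  have "Lop n a b (jacobi n a b) = smult (1 / 2 ^ n) (\<Sum>k\<le>n. JZ n a b k - JZ n a b (Suc k))"
    unfolding jacobi_alt Lop_smult[of n a b "1 / 2 ^ n"] Lop_sum
    by (rule arg_cong[where f="smult (1 / 2 ^ n)"], rule sum.cong[OF refl], rule KEY, simp)
  also have "\<dots> = smult (1 / 2 ^ n) (JZ n a b 0 - JZ n a b (Suc n))"
    by (subst sum_telescope) simp
  also have "\<dots> = 0" by (simp add: JZ_def JY_def)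
  finally show ?thesis .
qed

lemma jacobi_ode:
  "[:1,0,-1:] * pderiv (pderiv (jacobi n a b)) + [:b - a, -(a+b+2):] * pderiv (jacobi n a b)
     + smult (of_nat n * (of_nat n + a + b + 1)) (jacobi n a b) = 0"
proof -
  have "[:1,0,-1:] * pderiv (pderiv (jacobi n a b)) + [:b - a, -(a+b+2):] * pderiv (jacobi n a b)
     + smult (of_nat n * (of_nat n + a + b + 1)) (jacobi n a b) = Lop n a b (jacobi n a b)"
  proof -
    have e1: "[:1,0,-1:] = -(UU * VV)" by (simp add: UU_def VV_def)
    have e2: "[:b - a, -(a+b+2):] = -(([:a:]+1) * VV + ([:b:]+1) * UU)"
      by (simp add: UU_def VV_def one_pCons algebra_simps)
    show ?thesis unfolding Lop_def e1 e2 smult_as by (simp add: algebra_simps)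
  qed
  thus ?thesis using Lop_jacobi by simp
qed


lemma pcompose_ode:
  fixes p :: "complex poly" and c B A K :: complex
  assumes "[:1,0,-1:] * pderiv (pderiv p) + [:B, -(A+2):] * pderiv p + smult K p = 0"
  shows "[:1-c^2, -2*c, -1:] * pderiv (pderiv (pcompose p [:c,1:]))
     + [:B - (A+2)*c, -(A+2):] * pderiv (pcompose p [:c,1:]) + smult K (pcompose p [:c,1:]) = 0"
proof -
  have d1: "\<And>q. pderiv (pcompose q [:c,1:]) = pcompose (pderiv q) [:c,1:]"
    by (simp add: pderiv_pcompose pderiv_pCons)
  have e1: "pcompose [:1,0,-1:] [:c,1::complex:] = [:1-c^2, -2*c, -1:]"
    by (simp add: pcompose_pCons algebra_simps power2_eq_square)
  have e2: "pcompose [:B, -(A+2):] [:c,1::complex:] = [:B - (A+2)*c, -(A+2):]"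
    by (simp add: pcompose_pCons algebra_simps)
  have "pcompose ([:1,0,-1:] * pderiv (pderiv p) + [:B, -(A+2):] * pderiv p + smult K p) [:c,1:] = 0"
    using assms by simp
  thus ?thesis unfolding pcompose_add pcompose_mult pcompose_smult e1 e2 by (simp only: d1)
qed

lemma coeff_quad_mult:
  "coeff ([:x0, x1, x2:] * R) k = x0 * coeff R k + (if k = 0 then 0 else x1 * coeff R (k-1))
     + (if k \<le> 1 then 0 else x2 * coeff R (k-2))"
  by (cases k; cases "k-1") (auto simp: coeff_pCons mult_pCons_left algebra_simps)

lemma coeff_lin_mult:
  "coeff ([:x0, x1:] * R) k = x0 * coeff R k + (if k = 0 then 0 else x1 * coeff R (k-1))"
  by (cases k) (auto simp: coeff_pCons mult_pCons_left)

lemma rec_general: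
  fixes Q :: "complex poly" and c B A K :: complex
  assumes "[:1-c^2, -2*c, -1:] * pderiv (pderiv Q) + [:B - (A+2)*c, -(A+2):] * pderiv Q + smult K Q = 0"
  shows "(1-c^2) * of_nat (k+1) * of_nat (k+2) * coeff Q (k+2)
     + ((B - (A+2)*c) * of_nat (k+1) - 2*c* of_nat k * of_nat (k+1)) * coeff Q (k+1)
     + (K - of_nat k * (of_nat k - 1) - (A+2) * of_nat k) * coeff Q k = 0"
proof -
  have "coeff ([:1-c^2, -2*c, -1:] * pderiv (pderiv Q) + [:B - (A+2)*c, -(A+2):] * pderiv Q + smult K Q) k = 0"
    using assms by simp
  thus ?thesis
    unfolding coeff_add coeff_quad_mult coeff_lin_mult coeff_smult
    by (cases k; cases "k-1") (auto simp: coeff_pderiv algebra_simps)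
qed


definition lf :: "complex multiset \<Rightarrow> complex poly" where
  "lf X = (\<Prod>x\<in>#X. [:-x, 1:])"

definition lfac :: "complex \<Rightarrow> complex poly" where
  "lfac x = (if norm x \<le> 1 then [:-x, 1:] else [:-1, cnj x:])"

definition lf' :: "complex multiset \<Rightarrow> complex poly" where
  "lf' X = (\<Prod>x\<in>#X. lfac x)"

definition nsq :: "nat \<Rightarrow> complex poly \<Rightarrow> real" where
  "nsq N p = (\<Sum>k<N. (norm (coeff p k))^2)"

lemma norm_ident:
  fixes u v x :: complex
  shows "(norm (u - x * v))^2 - (norm (cnj x * u - v))^2 = ((norm u)^2 - (norm v)^2) * (1 - (norm x)^2)"
  unfolding cmod_power2 by (simp add: power2_eq_square algebra_simps)

lemma coeff_lin_mult':
  "coeff ([:x0, x1:] * R) k = x0 * coeff R k + (if k = 0 then 0 else x1 * coeff R (k-1))"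
  by (cases k) (auto simp: coeff_pCons mult_pCons_left)

lemma nsq_factor:
  assumes "degree S + 1 < N"
  shows "nsq N ([:-x, 1:] * S) = nsq N ([:-1, cnj x:] * S)"
proof -
  define u where "u k = (if k = 0 then 0 else coeff S (k-1))" for k
  have c1: "coeff ([:-x, 1:] * S) k = u k - x * coeff S k" for k
    unfolding coeff_lin_mult' u_def by simp
  have c2: "coeff ([:-1, cnj x:] * S) k = cnj x * u k - coeff S k" for k
    unfolding coeff_lin_mult' u_def by simp
  have "nsq N ([:-x, 1:] * S) - nsq N ([:-1, cnj x:] * S)
      = (\<Sum>k<N. ((norm (u k))^2 - (norm (coeff S k))^2) * (1 - (norm x)^2))"
    unfolding nsq_def c1 c2 sum_subtractf[symmetric] by (rule sum.cong) (simp_all add: norm_ident)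
  also have "\<dots> = ((\<Sum>k<N. (norm (u k))^2) - (\<Sum>k<N. (norm (coeff S k))^2)) * (1 - (norm x)^2)"
    by (simp add: sum_subtractf[symmetric] sum_distrib_right left_diff_distrib)
  also have "(\<Sum>k<N. (norm (u k))^2) = (\<Sum>k<N. (norm (coeff S k))^2)"
  proof -
    obtain M where M: "N = Suc M" using assms by (cases N) auto
    have "(\<Sum>k<N. (norm (u k))^2) = (\<Sum>k<M. (norm (u (Suc k)))^2) + (norm (u 0))^2"
      unfolding M sum.lessThan_Suc_shift by simp
    also have "\<dots> = (\<Sum>k<M. (norm (coeff S k))^2)" by (simp add: u_def)
    also have "\<dots> = (\<Sum>k<N. (norm (coeff S k))^2)"
      unfolding M using assms M by (simp add: coeff_eq_0)
    finally show ?thesis .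
  qed
  finally show ?thesis by simp
qed

lemma degree_lf'_le: "degree (lf' X) \<le> size X"
proof (induction X)
  case (add x X)
  have "degree (lfac x * lf' X) \<le> degree (lfac x) + degree (lf' X)" by (rule degree_mult_le)
  also have "degree (lfac x) \<le> 1" by (simp add: lfac_def)
  finally show ?case using add by (simp add: lf'_def)
qed (simp add: lf'_def)

lemma nsq_lf_lf':
  "degree S + size X + 1 < N \<Longrightarrow> nsq N (lf X * S) = nsq N (lf' X * S)"
proof (induction X arbitrary: S)
  case empty thus ?case by (simp add: lf_def lf'_def)
next
  case (add x X)
  have "nsq N (lf (add_mset x X) * S) = nsq N (lf X * ([:-x,1:] * S))"
    by (simp add: lf_def algebra_simps)
  also have "\<dots> = nsq N (lf' X * ([:-x,1:] * S))"
  proof (rule add.IH)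
    have "degree ([:-x,1:] * S) \<le> degree S + 1"
      using degree_mult_le[of "[:-x,1:]" S] by simp
    thus "degree ([:-x,1:] * S) + size X + 1 < N" using add.prems by simp
  qed
  also have "\<dots> = nsq N ([:-x,1:] * (lf' X * S))" by (simp add: algebra_simps)
  also have "\<dots> = nsq N (lfac x * (lf' X * S))"
  proof (cases "norm x \<le> 1")
    case True thus ?thesis by (simp add: lfac_def)
  next
    case False
    have "degree (lf' X * S) \<le> size X + degree S"
      using degree_mult_le[of "lf' X" S] degree_lf'_le[of X] by simp
    hence d: "degree (lf' X * S) + 1 < N" using add.prems by simp
    have lx: "lfac x = [:-1, cnj x:]" using False by (simp add: lfac_def)
    show ?thesis unfolding lx by (rule nsq_factor[OF d])
  qed
  also have "\<dots> = nsq N (lf' (add_mset x X) * S)" by (simp add: lf'_def algebra_simps)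
  finally show ?case .
qed

lemma coeff_lf'_top: "coeff (lf' X) (size X) = (\<Prod>x\<in>#X. (if norm x \<le> 1 then 1 else cnj x))"
proof (induction X)
  case (add x X)
  have z: "coeff (lf' X) (Suc (size X)) = 0"
    using degree_lf'_le[of X] by (simp add: coeff_eq_0)
  show ?case using add z by (simp add: lf'_def lfac_def coeff_lin_mult')
qed (simp add: lf'_def)

lemma lf_nz: "lf X \<noteq> 0"
  unfolding lf_def by (auto simp: prod_mset_zero_iff)

lemma degree_lf: "degree (lf X) = size X"
proof (induction X)
  case (add x X)
  have "lf (add_mset x X) = [:-x,1:] * lf X" by (simp add: lf_def)
  also have "degree \<dots> = degree [:-x,1::complex:] + degree (lf X)"
    by (rule degree_mult_eq) (simp_all add: lf_nz)
  finally show ?case using add by simp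
qed (simp add: lf_def)

lemma sq_sum_le:
  fixes f :: "'a \<Rightarrow> real"
  assumes "finite A" "\<And>x. x \<in> A \<Longrightarrow> 0 \<le> f x"
  shows "(\<Sum>x\<in>A. (f x)^2) \<le> (\<Sum>x\<in>A. f x)^2"
  using assms
proof (induction A rule: finite_induct)
  case (insert a A)
  have "0 \<le> f a * (\<Sum>x\<in>A. f x)" using insert by (simp add: sum_nonneg)
  thus ?case using insert by (simp add: power2_eq_square algebra_simps)
qed simp

lemma landau:
  "(\<Prod>x\<in>#X. max 1 (norm x)) \<le> (\<Sum>k\<le>size X. norm (coeff (lf X) k))"
proof -
  define N where "N = size X + 2"
  have eq: "nsq N (lf X) = nsq N (lf' X)" using nsq_lf_lf'[of 1 X N] by (simp add: N_def)
  have "norm (coeff (lf' X) (size X)) = (\<Prod>x\<in>#X. max 1 (norm x))"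
    unfolding coeff_lf'_top by (induction X) (auto simp: norm_mult)
  hence "(\<Prod>x\<in>#X. max 1 (norm x))^2 \<le> nsq N (lf' X)"
  proof -
    assume h: "norm (coeff (lf' X) (size X)) = (\<Prod>x\<in>#X. max 1 (norm x))"
    have "(norm (coeff (lf' X) (size X)))^2 \<le> (\<Sum>k<N. (norm (coeff (lf' X) k))^2)"
      by (rule member_le_sum) (auto simp: N_def)
    thus ?thesis using h by (simp add: nsq_def)
  qed
  also have "\<dots> = nsq N (lf X)" using eq ..
  also have "\<dots> \<le> (\<Sum>k<N. norm (coeff (lf X) k))^2"
    unfolding nsq_def by (rule sq_sum_le) simp_all
  also have "(\<Sum>k<N. norm (coeff (lf X) k)) = (\<Sum>k\<le>size X. norm (coeff (lf X) k))"
  proof -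
    have "(\<Sum>k<N. norm (coeff (lf X) k)) = (\<Sum>k<Suc (size X). norm (coeff (lf X) k)) + norm (coeff (lf X) (Suc (size X)))"
      unfolding N_def by simp
    also have "coeff (lf X) (Suc (size X)) = 0" by (simp add: coeff_eq_0 degree_lf)
    finally show ?thesis by (simp add: lessThan_Suc_atMost)
  qed
  finally show ?thesis
    by (rule power2_le_imp_le) (simp add: sum_nonneg)
qed


lemma exp_partial:
  fixes x :: real assumes "0 \<le> x"
  shows "(\<Sum>j\<le>n. x^j / fact j) \<le> exp x"
proof -
  have s: "(\<lambda>j. x^j / fact j) sums exp x" using exp_converges[of x] by (simp add: divide_inverse mult.commute)
  show ?thesis
    using sum_le_suminf[OF sums_summable[OF s], of "{..n}"] sums_unique[OF s] assms by simp
qed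

lemma lf_scale:
  fixes s :: complex assumes "s \<noteq> 0"
  shows "lf Y = smult (s ^ size Y) (pcompose (lf (image_mset (\<lambda>y. y / s) Y)) [:0, 1/s:])"
proof (induction Y)
  case empty thus ?case by (simp add: lf_def pcompose_1)
next
  case (add y Y)
  have f: "[:-y, 1:] = smult s (pcompose [:-y/s, 1:] [:0, 1/s:])"
    using assms by (simp add: pcompose_pCons)
  have "lf (add_mset y Y) = [:-y, 1:] * lf Y" by (simp add: lf_def)
  also have "\<dots> = smult s (pcompose [:-y/s, 1:] [:0, 1/s:]) * smult (s ^ size Y) (pcompose (lf (image_mset (\<lambda>y. y / s) Y)) [:0, 1/s:])"
    using add f by simp
  also have "\<dots> = smult (s ^ size (add_mset y Y)) (pcompose ([:-y/s, 1:] * lf (image_mset (\<lambda>y. y / s) Y)) [:0, 1/s:])"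
    unfolding pcompose_mult by (simp only: mult_smult_left mult_smult_right smult_smult size_add_mset power_Suc mult.commute)
  also have "[:-y/s, 1:] * lf (image_mset (\<lambda>y. y / s) Y) = lf (image_mset (\<lambda>y. y / s) (add_mset y Y))"
    by (simp add: lf_def)
  finally show ?case .
qed

lemma prod_max_ge:
  fixes Y :: "complex multiset" and t :: real assumes "t \<ge> 1"
  shows "t ^ size (filter_mset (\<lambda>y. t \<le> norm y) Y) \<le> (\<Prod>y\<in>#Y. max 1 (norm y))"
proof (induction Y)
  case (add y Y)
  have nn: "0 \<le> t ^ size (filter_mset (\<lambda>y. t \<le> norm y) Y)" using assms by simp
  show ?case
  proof (cases "t \<le> norm y")
    case True
    hence "t * t ^ size (filter_mset (\<lambda>y. t \<le> norm y) Y) \<le> max 1 (norm y) * (\<Prod>y\<in>#Y. max 1 (norm y))"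
      using add nn assms by (intro mult_mono) auto
    thus ?thesis using True by simp
  next
    case False
    have "1 * t ^ size (filter_mset (\<lambda>y. t \<le> norm y) Y) \<le> max 1 (norm y) * (\<Prod>y\<in>#Y. max 1 (norm y))"
      using add nn assms by (intro mult_mono) auto
    thus ?thesis using False by simp
  qed
qed simp

lemma count_bound:
  fixes Y :: "complex multiset" and g s :: real
  assumes s: "s > 0" and g: "g \<ge> 0"
    and cb: "\<And>k. k \<le> size Y \<Longrightarrow> norm (coeff (lf Y) k) \<le> (g * size Y) ^ (size Y - k) / fact (size Y - k)"
  shows "real (size (filter_mset (\<lambda>y. exp 1 * s \<le> norm y) Y)) \<le> g * size Y / s"
proof -
  define n where "n = size Y"
  define Z where "Z = image_mset (\<lambda>y. y / complex_of_real s) Y"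
  define m where "m = size (filter_mset (\<lambda>y. exp 1 * s \<le> norm y) Y)"
  have sz: "size Z = n" by (simp add: Z_def n_def)
  have sc: "complex_of_real s \<noteq> 0" using s by simp
  have cZ: "norm (coeff (lf Z) k) \<le> (g * n / s) ^ (n - k) / fact (n - k)" if k: "k \<le> n" for k
  proof -
    have "coeff (lf Y) k = complex_of_real s ^ n * ((1 / complex_of_real s) ^ k * coeff (lf Z) k)"
      using lf_scale[OF sc, of Y] unfolding Z_def[symmetric] n_def
      by (simp add: coeff_pcompose_linear)
    hence "norm (coeff (lf Y) k) = s ^ n / s ^ k * norm (coeff (lf Z) k)"
      using s by (simp add: norm_mult norm_power norm_divide power_one_over)
    also have "s ^ n / s ^ k = s ^ (n - k)" using s k by (simp add: power_diff)
    finally have "norm (coeff (lf Z) k) = norm (coeff (lf Y) k) / s ^ (n - k)"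
      using s by (simp add: field_simps)
    also have "\<dots> \<le> ((g * n) ^ (n - k) / fact (n - k)) / s ^ (n - k)"
      using cb[of k] k s unfolding n_def by (intro divide_right_mono) auto
    also have "\<dots> = (g * n / s) ^ (n - k) / fact (n - k)" by (simp add: power_divide field_simps)
    finally show ?thesis .
  qed
  have "exp (real m) = exp 1 ^ m" by (simp add: exp_of_nat_mult[symmetric])
  also have "exp 1 ^ m = (exp 1) ^ size (filter_mset (\<lambda>z. exp 1 \<le> norm z) Z)"
  proof -
    have "filter_mset (\<lambda>z. exp 1 \<le> norm z) Z = image_mset (\<lambda>y. y / complex_of_real s) (filter_mset (\<lambda>y. exp 1 * s \<le> norm y) Y)"
      unfolding Z_def using s by (simp add: image_mset_filter_mset_swap[symmetric] norm_divide o_def pos_le_divide_eq)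
    thus ?thesis by (simp add: m_def)
  qed
  also have "\<dots> \<le> (\<Prod>z\<in>#Z. max 1 (norm z))" by (rule prod_max_ge) simp
  also have "\<dots> \<le> (\<Sum>k\<le>n. norm (coeff (lf Z) k))" using landau[of Z] sz by simp
  also have "\<dots> \<le> (\<Sum>k\<le>n. (g * n / s) ^ (n - k) / fact (n - k))" by (rule sum_mono) (rule cZ, simp)
  also have "\<dots> = (\<Sum>j\<le>n. (g * n / s) ^ j / fact j)"
    by (rule sum.reindex_bij_witness[of _ "\<lambda>j. n - j" "\<lambda>j. n - j"]) auto
  also have "\<dots> \<le> exp (g * n / s)" by (rule exp_partial) (use s g in simp)
  finally have "real m \<le> g * n / s" by simp
  thus ?thesis unfolding m_def n_def .
qed


lemma max_arg:
  fixes f :: "nat \<Rightarrow> real"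
  obtains j where "j \<le> n" "\<And>k. k \<le> n \<Longrightarrow> f k \<le> f j"
proof -
  have "\<exists>j\<le>n. \<forall>k\<le>n. f k \<le> f j"
  proof (induction n)
    case 0 thus ?case by auto
  next
    case (Suc n)
    then obtain j where j: "j \<le> n" "\<forall>k\<le>n. f k \<le> f j" by blast
    show ?case
    proof (cases "f (Suc n) \<le> f j")
      case True thus ?thesis using j by (metis le_SucE le_SucI)
    next
      case False thus ?thesis using j by (metis le_SucE linorder_le_less_linear order.strict_iff_order order_refl order_trans)
    qed
  qed
  thus ?thesis using that by blast
qed

lemma W_step:
  fixes x :: real assumes "j < n"
  shows "x ^ (n - j) / fact (n - j) * of_nat (n - j) = x * (x ^ (n - Suc j) / fact (n - Suc j))"
proof -
  have e: "n - j = Suc (n - Suc j)" using assms by arith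
  have "x ^ Suc m / fact (Suc m) * of_nat (Suc m) = x * (x ^ m / fact m)" for m
  proof -
    have "fact (Suc m) = (of_nat (Suc m) :: real) * fact m" by (rule fact_Suc)
    moreover have "(of_nat (Suc m) :: real) \<noteq> 0" by (rule of_nat_neq_0)
    ultimately show ?thesis by simp
  qed
  thus ?thesis unfolding e .
qed

lemma abs_id:
  fixes a b t y z q w :: real
  shows "a * (t * y * z / q) + b * (t * y / w) = t * y * (a * z / q + b / w)"
  by (simp add: divide_inverse algebra_simps)

lemma bracket_bound:
  fixes j n :: nat and g a b :: real
  assumes jn: "j < n" and g: "g > 0" and a: "a \<ge> 0" and b: "b \<ge> 0"
  shows "a * ((real j + 1) * (real j + 2)) * (real n - real j - 1) / (g * n)^2 + 2 * b * (real j * (real j + 1)) / (g * n)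
     \<le> 2 * a * n / g^2 + 2 * b * n / g"
proof -
  have n: "real n \<ge> 1" using jn by simp
  have j1: "real j + 1 \<le> real n" using jn by (simp add: Suc_le_eq[symmetric] del: of_nat_Suc)
  have p1: "(real j + 1) * (real j + 2) * (real n - real j - 1) \<le> real n * (2 * real n) * real n"
  proof (rule mult_mono)
    show "(real j + 1) * (real j + 2) \<le> real n * (2 * real n)" using j1 n by (intro mult_mono) auto
  qed (use j1 n in auto)
  have p2: "real j * (real j + 1) \<le> real n * real n" using j1 by (intro mult_mono) auto
  have "a * ((real j + 1) * (real j + 2)) * (real n - real j - 1) / (g * n)^2 \<le> a * (real n * (2 * real n) * real n) / (g * n)^2"
    using p1 a by (simp add: divide_right_mono mult_left_mono mult.assoc)
  also have "\<dots> = 2 * a * n / g^2" using g n by (simp add: field_simps power2_eq_square)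
  finally have q1: "a * ((real j + 1) * (real j + 2)) * (real n - real j - 1) / (g * n)^2 \<le> 2 * a * n / g^2" .
  have "2 * b * (real j * (real j + 1)) / (g * n) \<le> 2 * b * (real n * real n) / (g * n)"
    by (rule divide_right_mono[OF mult_left_mono[OF p2]]) (use b g n in auto)
  also have "\<dots> = 2 * b * n / g" using g n by (simp add: field_simps)
  finally have q2: "2 * b * (real j * (real j + 1)) / (g * n) \<le> 2 * b * n / g" .
  show ?thesis using q1 q2 by simp
qed

lemma down_bound:
  fixes b :: "nat \<Rightarrow> complex" and c A :: complex and g :: real
  assumes rec: "\<And>k. k < n \<Longrightarrow> (1 - c^2) * of_nat (k+1) * of_nat (k+2) * b (k+2)
      - 2 * c * of_nat k * of_nat (k+1) * b (k+1) + (of_nat n - of_nat k) * (of_nat n + of_nat k + A + 1) * b k = 0"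
    and zero: "\<And>k. n < k \<Longrightarrow> b k = 0" and bn: "b n \<noteq> 0" and g: "g > 0" and n: "n \<ge> 1"
    and big: "norm A > 2 * n + 2 * norm (1 - c^2) * n / g^2 + 2 * norm c * n / g"
  shows "\<And>k. k \<le> n \<Longrightarrow> norm (b k) \<le> norm (b n) * ((g * n) ^ (n - k) / fact (n - k))"
proof -
  define W where "W k = (g * n) ^ (n - k) / fact (n - k)" for k
  have Wpos: "W k > 0" for k using g n by (simp add: W_def)
  obtain j where j: "j \<le> n" and jmax: "\<And>k. k \<le> n \<Longrightarrow> norm (b k) / W k \<le> norm (b j) / W j"
    using max_arg[of n "\<lambda>k. norm (b k) / W k"] by blast
  define T where "T = norm (b j) / W j"
  have T0: "T \<ge> 0" using Wpos[of j] by (simp add: T_def)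
  have hT: "norm (b k) \<le> T * W k" for k
  proof (cases "k \<le> n")
    case True thus ?thesis using jmax[OF True] Wpos[of k] by (simp add: T_def pos_divide_le_eq)
  next
    case False thus ?thesis using zero[of k] T0 Wpos[of k] by simp
  qed
  have bj: "norm (b j) = T * W j" using Wpos[of j] by (simp add: T_def)
  have "j = n"
  proof (rule ccontr)
    assume "j \<noteq> n" hence jn: "j < n" using j by simp
    define R where "R = 2 * norm (1 - c^2) * n / g^2 + 2 * norm c * n / g"
    have gn: "g * n > 0" using g n by simp
    have rnj: "real (n - j) = real n - real j" "real (n - Suc j) = real n - real j - 1" using jn by (simp_all add: of_nat_diff)
    have b1: "norm (b (j+1)) \<le> T * W j * (real n - real j) / (g * n)"
    proof -
      have "W j * of_nat (n - j) = g * n * W (Suc j)" unfolding W_def by (rule W_step[OF jn])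
      hence "W (j+1) = W j * (n - j) / (g * n)" using gn g n by (simp add: eq_divide_eq algebra_simps)
      thus ?thesis using hT[of "j+1"] rnj by simp
    qed
    have b2: "norm (b (j+2)) \<le> T * W j * (real n - real j) * (real n - real j - 1) / (g * n)^2"
    proof (cases "j + 2 \<le> n")
      case True
      have "W j * of_nat (n - j) = g * n * W (Suc j)" unfolding W_def by (rule W_step[OF jn])
      moreover have "W (Suc j) * of_nat (n - Suc j) = g * n * W (Suc (Suc j))" unfolding W_def by (rule W_step) (use True in simp)
      ultimately have "W j * (n - j) * (n - j - 1) = (g * n)^2 * W (j+2)"
        by (simp add: algebra_simps power2_eq_square of_nat_diff)
      hence "W (j+2) = W j * (n - j) * (n - j - 1) / (g * n)^2"
        using gn g n by (simp add: eq_divide_eq algebra_simps)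
      thus ?thesis using hT[of "j+2"] rnj by (simp add: mult.assoc)
    next
      case False
      have "0 \<le> T * W j * (real n - real j) * (real n - real j - 1) / (g * n)^2" using T0 Wpos[of j] jn False by simp
      thus ?thesis using zero[of "j+2"] False by simp
    qed
    have eq: "(of_nat n - of_nat j) * (of_nat n + of_nat j + A + 1) * b j
        = - ((1 - c^2) * of_nat (j+1) * of_nat (j+2) * b (j+2)) + 2 * c * of_nat j * of_nat (j+1) * b (j+1)"
      using rec[OF jn] by (simp add: algebra_simps)
    have "(real n - real j) * norm (of_nat n + of_nat j + A + 1) * norm (b j)
        = norm ((of_nat n - of_nat j) * (of_nat n + of_nat j + A + 1) * b j)"
    proof -
      have "of_nat n - of_nat j = (of_nat (n - j) :: complex)" using jn by (simp add: of_nat_diff)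
      hence "norm (of_nat n - of_nat j :: complex) = real (n - j)" by (metis norm_of_nat)
      thus ?thesis using jn by (simp add: norm_mult of_nat_diff)
    qed
    also have "\<dots> \<le> norm (1 - c^2) * ((real j + 1) * (real j + 2)) * norm (b (j+2)) + 2 * norm c * (real j * (real j + 1)) * norm (b (j+1))"
    proof -
      have t: "norm (- X + Y) \<le> norm X + norm Y" for X Y :: complex
        by (metis norm_minus_cancel norm_triangle_ineq)
      have e1: "norm (of_nat (j+1) :: complex) = real j + 1" using norm_of_nat[where 'a=complex, of "j+1"] by simp
      have e2: "norm (of_nat (j+2) :: complex) = real j + 2" using norm_of_nat[where 'a=complex, of "j+2"] by simp
      have e0: "norm (of_nat j :: complex) = real j" by (simp only: norm_of_nat)
      have n1: "norm ((1 - c^2) * of_nat (j+1) * of_nat (j+2) * b (j+2)) = norm (1 - c^2) * ((real j + 1) * (real j + 2)) * norm (b (j+2))"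
        by (simp only: norm_mult e1 e2 mult.assoc)
      have n2: "norm (2 * c * of_nat j * of_nat (j+1) * b (j+1)) = 2 * norm c * (real j * (real j + 1)) * norm (b (j+1))"
        by (simp only: norm_mult e1 e0 mult.assoc norm_numeral)
      show ?thesis unfolding eq using t n1 n2 by metis
    qed
    also have "\<dots> \<le> norm (1 - c^2) * ((real j + 1) * (real j + 2)) * (T * W j * (real n - real j) * (real n - real j - 1) / (g * n)^2)
        + 2 * norm c * (real j * (real j + 1)) * (T * W j * (real n - real j) / (g * n))"
    proof (rule add_mono)
      show "norm (1 - c^2) * ((real j + 1) * (real j + 2)) * norm (b (j+2)) \<le> norm (1 - c^2) * ((real j + 1) * (real j + 2)) * (T * W j * (real n - real j) * (real n - real j - 1) / (g * n)^2)"
        by (rule mult_left_mono) (use b2 in auto)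
      show "2 * norm c * (real j * (real j + 1)) * norm (b (j+1)) \<le> 2 * norm c * (real j * (real j + 1)) * (T * W j * (real n - real j) / (g * n))"
        by (rule mult_left_mono) (use b1 in auto)
    qed
    also have "\<dots> = T * W j * (real n - real j) * (norm (1 - c^2) * ((real j + 1) * (real j + 2)) * (real n - real j - 1) / (g * n)^2
        + 2 * norm c * (real j * (real j + 1)) / (g * n))"
      by (rule abs_id)
    also have "\<dots> \<le> T * W j * (real n - real j) * R"
    proof (rule mult_left_mono)
      show "norm (1 - c^2) * ((real j + 1) * (real j + 2)) * (real n - real j - 1) / (g * n)^2 + 2 * norm c * (real j * (real j + 1)) / (g * n) \<le> R"
        unfolding R_def by (rule bracket_bound) (use jn g in auto)
      show "0 \<le> T * W j * (real n - real j)" using T0 Wpos[of j] jn by simp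
    qed
    finally have ineq: "(real n - real j) * norm (of_nat n + of_nat j + A + 1) * norm (b j) \<le> T * W j * (real n - real j) * R" .
    have "norm A - 2 * n \<le> norm (of_nat n + of_nat j + A + 1)"
    proof -
      have "norm A \<le> norm (of_nat n + of_nat j + A + 1) + norm (of_nat n + of_nat j + 1 :: complex)"
        using norm_triangle_ineq4[of "of_nat n + of_nat j + A + 1" "of_nat n + of_nat j + 1"] by (simp add: algebra_simps)
      moreover have "norm (of_nat n + of_nat j + 1 :: complex) \<le> 2 * n"
      proof -
        have "norm (of_nat n + of_nat j + 1 :: complex) = real (n + j + 1)" by (metis norm_of_nat of_nat_1 of_nat_add)
        thus ?thesis using jn by simp
      qed
      ultimately show ?thesis by simp
    qed
    hence "(real n - real j) * (norm A - 2 * n) * (T * W j) \<le> (real n - real j) * norm (of_nat n + of_nat j + A + 1) * norm (b j)"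
      unfolding bj using jn T0 Wpos[of j] by (intro mult_right_mono mult_left_mono) auto
    with ineq have "(real n - real j) * (T * W j) * (norm A - 2 * n - R) \<le> 0" by (simp add: algebra_simps)
    moreover have "norm A - 2 * n - R > 0" using big unfolding R_def by simp
    ultimately have "(real n - real j) * (T * W j) \<le> 0" by (simp add: mult_le_0_iff)
    hence "T * W j = 0" using jn T0 Wpos[of j] by (simp add: mult_le_0_iff zero_le_mult_iff)
    hence "T = 0" using Wpos[of j] by simp
    hence "norm (b n) \<le> 0" using hT[of n] by simp
    thus False using bn by simp
  qed
  have Wn: "W n = 1" by (simp add: W_def)
  show "norm (b k) \<le> norm (b n) * ((g * n) ^ (n - k) / fact (n - k))" if "k \<le> n" for k
    using hT[of k] bj \<open>j = n\<close> Wn by (simp add: W_def)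
qed


lemma W_step2:
  fixes x :: real
  shows "x ^ Suc k / fact (Suc k) * of_nat (Suc k) = x ^ k / fact k * x"
proof -
  have "fact (Suc k) = (of_nat (Suc k) :: real) * fact k" by (rule fact_Suc)
  moreover have "(of_nat (Suc k) :: real) \<noteq> 0" by (rule of_nat_neq_0)
  ultimately show ?thesis by (simp add: mult.commute)
qed

lemma up_bound:
  fixes a :: "nat \<Rightarrow> complex" and B A :: complex and g :: real
  assumes rec: "\<And>k. k < n \<Longrightarrow> of_nat (k+1) * of_nat (k+2) * a (k+2) + B * of_nat (k+1) * a (k+1)
      + (of_nat n - of_nat k) * (of_nat n + of_nat k + A + 1) * a k = 0"
    and zero: "\<And>k. n < k \<Longrightarrow> a k = 0" and an: "a n \<noteq> 0" and g: "g > 0" and n: "n \<ge> 1"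
    and big: "norm B > g * n + (2 * n + norm A) / g"
  shows "\<And>k. k \<le> n \<Longrightarrow> norm (a k) \<le> norm (a 0) * ((g * n) ^ k / fact k)"
proof -
  define W where "W k = (g * n) ^ k / fact k" for k
  have Wpos: "W k > 0" for k using g n by (simp add: W_def)
  have gn: "g * n > 0" using g n by simp
  have Ws: "W (Suc k) * (real k + 1) = W k * (g * n)" for k
  proof -
    have "W (Suc k) * of_nat (Suc k) = W k * (g * n)" unfolding W_def by (rule W_step2)
    thus ?thesis by (simp add: add.commute)
  qed
  obtain j where j: "j \<le> n" and jmax: "\<And>k. k \<le> n \<Longrightarrow> norm (a k) / W k \<le> norm (a j) / W j"
    using max_arg[of n "\<lambda>k. norm (a k) / W k"] by blast
  define T where "T = norm (a j) / W j"
  have T0: "T \<ge> 0" using Wpos[of j] by (simp add: T_def)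
  have hT: "norm (a k) \<le> T * W k" for k
  proof (cases "k \<le> n")
    case True thus ?thesis using jmax[OF True] Wpos[of k] by (simp add: T_def pos_divide_le_eq)
  next
    case False thus ?thesis using zero[of k] T0 Wpos[of k] by simp
  qed
  have aj: "norm (a j) = T * W j" using Wpos[of j] by (simp add: T_def)
  have "j = 0"
  proof (rule ccontr)
    assume "j \<noteq> 0"
    then obtain m where m: "j = Suc m" by (cases j) auto
    have mn: "m < n" using j m by simp
    define V where "V = T * W (Suc m)"
    have V0: "V \<ge> 0" using T0 Wpos[of "Suc m"] by (simp add: V_def)
    have am2: "norm (a (m+2)) * (real m + 2) \<le> V * (g * n)"
    proof -
      have "norm (a (m+2)) * (real m + 2) \<le> T * W (Suc (Suc m)) * (real m + 2)"
        using hT[of "m+2"] by (intro mult_right_mono) auto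
      also have "\<dots> = V * (g * n)" using Ws[of "Suc m"] by (simp add: V_def algebra_simps)
      finally show ?thesis .
    qed
    have am0: "norm (a m) * (g * n) \<le> V * (real m + 1)"
    proof -
      have "norm (a m) * (g * n) \<le> T * W m * (g * n)"
        using hT[of m] gn by (intro mult_right_mono) auto
      also have "\<dots> = V * (real m + 1)" using Ws[of m] by (simp add: V_def algebra_simps)
      finally show ?thesis .
    qed
    have eq: "B * of_nat (m+1) * a (m+1) = - (of_nat (m+1) * of_nat (m+2) * a (m+2))
        - (of_nat n - of_nat m) * (of_nat n + of_nat m + A + 1) * a m"
      using rec[OF mn] by (simp add: algebra_simps)
    have e1: "norm (of_nat (m+1) :: complex) = real m + 1" using norm_of_nat[where 'a=complex, of "m+1"] by simp
    have e2: "norm (of_nat (m+2) :: complex) = real m + 2" using norm_of_nat[where 'a=complex, of "m+2"] by simp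
    have e3: "norm (of_nat n - of_nat m :: complex) = real n - real m"
    proof -
      have "of_nat n - of_nat m = (of_nat (n - m) :: complex)" using mn by (simp add: of_nat_diff)
      hence "norm (of_nat n - of_nat m :: complex) = real (n - m)" by (metis norm_of_nat)
      thus ?thesis using mn by (simp add: of_nat_diff)
    qed
    have e4: "norm (of_nat n + of_nat m + A + 1 :: complex) \<le> 2 * n + norm A"
    proof -
      have "norm (of_nat n + of_nat m + A + 1 :: complex) \<le> norm (of_nat n + of_nat m + 1 :: complex) + norm A"
        using norm_triangle_ineq[of "of_nat n + of_nat m + 1 :: complex" A] by (simp add: algebra_simps)
      moreover have "norm (of_nat n + of_nat m + 1 :: complex) = real (n + m + 1)" by (metis norm_of_nat of_nat_1 of_nat_add)
      ultimately show ?thesis using mn by simp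
    qed
    have "norm B * (real m + 1) * norm (a (m+1)) = norm (B * of_nat (m+1) * a (m+1))"
      by (simp only: norm_mult e1)
    also have "\<dots> \<le> (real m + 1) * (real m + 2) * norm (a (m+2)) + (real n - real m) * norm (of_nat n + of_nat m + A + 1 :: complex) * norm (a m)"
    proof -
      have t: "norm (- X - Y) \<le> norm X + norm Y" for X Y :: complex
        by (metis norm_minus_cancel norm_triangle_ineq4 minus_diff_eq diff_minus_eq_add add.commute)
      show ?thesis unfolding eq using t[of "of_nat (m+1) * of_nat (m+2) * a (m+2)" "(of_nat n - of_nat m) * (of_nat n + of_nat m + A + 1) * a m"]
        by (simp only: norm_mult e1 e2 e3)
    qed
    also have "\<dots> \<le> (real m + 1) * (V * (g * n)) + (real n * (2 * n + norm A)) * (V * (real m + 1) / (g * n))"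
    proof (rule add_mono)
      show "(real m + 1) * (real m + 2) * norm (a (m+2)) \<le> (real m + 1) * (V * (g * n))"
        using am2 by (simp add: mult.assoc mult_left_mono mult.commute)
      have "norm (a m) \<le> V * (real m + 1) / (g * n)" using am0 gn by (simp add: pos_le_divide_eq)
      moreover have "(real n - real m) * norm (of_nat n + of_nat m + A + 1 :: complex) \<le> real n * (2 * n + norm A)"
        using e4 mn by (intro mult_mono) auto
      ultimately show "(real n - real m) * norm (of_nat n + of_nat m + A + 1 :: complex) * norm (a m) \<le> (real n * (2 * n + norm A)) * (V * (real m + 1) / (g * n))"
        using V0 gn by (rule_tac mult_mono) auto
    qed
    also have "\<dots> = (real m + 1) * V * (g * n + (2 * n + norm A) / g)"
      using gn g n by (simp add: field_simps)
    finally have "(real m + 1) * V * (norm B - (g * n + (2 * n + norm A) / g)) \<le> 0"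
      using aj m by (simp add: V_def algebra_simps)
    moreover have "norm B - (g * n + (2 * n + norm A) / g) > 0" using big by simp
    ultimately have "(real m + 1) * V \<le> 0" by (simp add: mult_le_0_iff)
    hence "V = 0" using V0 by (simp add: mult_le_0_iff)
    hence "T = 0" using Wpos[of "Suc m"] by (simp add: V_def)
    hence "norm (a n) \<le> 0" using hT[of n] by simp
    thus False using an by simp
  qed
  have W0: "W 0 = 1" by (simp add: W_def)
  show "norm (a k) \<le> norm (a 0) * ((g * n) ^ k / fact k)" if "k \<le> n" for k
    using hT[of k] aj \<open>j = 0\<close> W0 by (simp add: W_def)
qed


lemma jac_shift_rec:
  fixes n :: nat and a b c :: complex
  assumes Bc: "b - a = (a + b + 2) * c"
  shows "(1 - c^2) * of_nat (k+1) * of_nat (k+2) * coeff (pcompose (jacobi n a b) [:c,1:]) (k+2)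
      - 2 * c * of_nat k * of_nat (k+1) * coeff (pcompose (jacobi n a b) [:c,1:]) (k+1)
      + (of_nat n - of_nat k) * (of_nat n + of_nat k + (a + b) + 1) * coeff (pcompose (jacobi n a b) [:c,1:]) k = 0"
proof -
  have ode: "[:1,0,-1:] * pderiv (pderiv (jacobi n a b)) + [:b - a, -((a+b)+2):] * pderiv (jacobi n a b)
     + smult (of_nat n * (of_nat n + (a+b) + 1)) (jacobi n a b) = 0"
    using jacobi_ode[of n a b] by (simp add: add.assoc)
  note R = rec_general[OF pcompose_ode[OF ode, of c], of k]
  have e1: "(b - a - (a + b + 2) * c) = 0" using Bc by simp
  have e2: "of_nat n * (of_nat n + (a+b) + 1) - of_nat k * (of_nat k - 1) - ((a+b) + 2) * of_nat k
     = (of_nat n - of_nat k) * (of_nat n + of_nat k + (a + b) + 1 :: complex)"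
    by (simp add: algebra_simps)
  show ?thesis using R unfolding e1 e2 by (simp add: algebra_simps)
qed

lemma jac_rec0:
  fixes n :: nat and a b :: complex
  shows "of_nat (k+1) * of_nat (k+2) * coeff (jacobi n a b) (k+2)
      + (b - a) * of_nat (k+1) * coeff (jacobi n a b) (k+1)
      + (of_nat n - of_nat k) * (of_nat n + of_nat k + (a + b) + 1) * coeff (jacobi n a b) k = 0"
proof -
  have ode: "[:1,0,-1:] * pderiv (pderiv (jacobi n a b)) + [:b - a, -((a+b)+2):] * pderiv (jacobi n a b)
     + smult (of_nat n * (of_nat n + (a+b) + 1)) (jacobi n a b) = 0"
    using jacobi_ode[of n a b] by (simp add: add.assoc)
  note R = rec_general[OF pcompose_ode[OF ode, of 0], of k]
  have e2: "of_nat n * (of_nat n + (a+b) + 1) - of_nat k * (of_nat k - 1) - ((a+b) + 2) * of_nat k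
     = (of_nat n - of_nat k) * (of_nat n + of_nat k + (a + b) + 1 :: complex)"
    by (simp add: algebra_simps)
  have pc: "pcompose (jacobi n a b) [:0, 1:] = jacobi n a b" by simp
  show ?thesis using R unfolding e2 pc by (simp add: algebra_simps)
qed

lemma lf_proots: "(p :: complex poly) \<noteq> 0 \<Longrightarrow> p = smult (lead_coeff p) (lf (proots p))"
  using complex_poly_decompose_multiset[of p] by (simp add: lf_def)

lemma lf_shift: "pcompose (lf X) [:c,1:] = lf (image_mset (\<lambda>x. x - c) X)"
proof (induction X)
  case (add x X)
  have f: "pcompose [:-x, 1:] [:c,1:] = [:-(x - c), 1:]" by (simp add: pcompose_pCons)
  have "pcompose (lf (add_mset x X)) [:c,1:] = pcompose [:-x, 1:] [:c,1:] * pcompose (lf X) [:c,1:]"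
    by (simp only: lf_def image_mset_add_mset prod_mset.add_mset pcompose_mult)
  also have "\<dots> = [:-(x - c), 1:] * lf (image_mset (\<lambda>x. x - c) X)" unfolding f add ..
  also have "\<dots> = lf (image_mset (\<lambda>x. x - c) (add_mset x X))" unfolding lf_def by simp
  finally show ?case .
qed (simp add: lf_def pcompose_1)

lemma reflect_lf: "0 \<notin># X \<Longrightarrow> reflect_poly (lf X) = smult (coeff (lf X) 0) (lf (image_mset inverse X))"
proof (induction X)
  case (add x X)
  have x: "x \<noteq> 0" using add.prems by auto
  have r: "reflect_poly [:-x, 1:] = smult (-x) [:-inverse x, 1:]"
    using x by (simp add: reflect_poly_def)
  have "reflect_poly (lf (add_mset x X)) = reflect_poly [:-x, 1:] * reflect_poly (lf X)"
    by (simp only: lf_def image_mset_add_mset prod_mset.add_mset reflect_poly_mult)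
  also have "\<dots> = smult (-x) [:-inverse x, 1:] * smult (coeff (lf X) 0) (lf (image_mset inverse X))"
    using add r by simp
  also have "\<dots> = smult (-x * coeff (lf X) 0) ([:-inverse x, 1:] * lf (image_mset inverse X))"
    by (simp only: mult_smult_left mult_smult_right smult_smult mult.commute)
  also have "-x * coeff (lf X) 0 = coeff (lf (add_mset x X)) 0"
    by (simp add: lf_def)
  also have "[:-inverse x, 1:] * lf (image_mset inverse X) = lf (image_mset inverse (add_mset x X))"
    by (simp only: lf_def image_mset_add_mset prod_mset.add_mset)
  finally show ?case .
qed (simp add: lf_def)

lemma coeff_lf_inv:
  assumes "0 \<notin># X" "k \<le> size X"
  shows "coeff (lf (image_mset inverse X)) k = coeff (lf X) (size X - k) / coeff (lf X) 0"
proof -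
  have c0: "coeff (lf X) 0 \<noteq> 0"
  proof -
    have "coeff (lf X) 0 = poly (lf X) 0" by (simp add: poly_0_coeff_0)
    also have "\<dots> = (\<Prod>x\<in>#X. - x)" by (simp add: lf_def poly_prod_mset)
    finally show ?thesis using assms(1) by (auto simp: prod_mset_zero_iff)
  qed
  have "coeff (reflect_poly (lf X)) k = coeff (lf X) (size X - k)"
    using assms(2) by (simp add: coeff_reflect_poly degree_lf)
  thus ?thesis using reflect_lf[OF assms(1)] c0 by (simp add: field_simps)
qed

lemma sum_mset_count:
  fixes f :: "'a \<Rightarrow> real"
  shows "sum_mset (image_mset f M) = (\<Sum>x\<in>set_mset M. of_nat (count M x) * f x)"
proof (induction M)
  case (add x M)
  show ?case
  proof (cases "x \<in> set_mset M")
    case True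
    have "(\<Sum>y\<in>set_mset (add_mset x M). of_nat (count (add_mset x M) y) * f y)
        = (\<Sum>y\<in>set_mset M. of_nat (count M y) * f y + (if y = x then f y else 0))"
      using True by (intro sum.cong) (auto simp: insert_absorb algebra_simps)
    also have "\<dots> = (\<Sum>y\<in>set_mset M. of_nat (count M y) * f y) + f x"
      using True by (simp add: sum.distrib)
    finally show ?thesis using add by simp
  next
    case False
    have "(\<Sum>y\<in>set_mset (add_mset x M). of_nat (count (add_mset x M) y) * f y)
        = f x + (\<Sum>y\<in>set_mset M. of_nat (count (add_mset x M) y) * f y)"
      using False by (simp add: count_eq_zero_iff)
    also have "(\<Sum>y\<in>set_mset M. of_nat (count (add_mset x M) y) * f y) = (\<Sum>y\<in>set_mset M. of_nat (count M y) * f y)"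
      using False by (intro sum.cong) auto
    finally show ?thesis using add by simp
  qed
qed simp

lemma root_integral_mset:
  "(p :: complex poly) \<noteq> 0 \<Longrightarrow> root_integral p f = sum_mset (image_mset f (proots p)) / degree p"
  unfolding root_integral_def sum_mset_count by simp


lemma lead_lf: "coeff (lf Y) (size Y) = 1"
proof (induction Y)
  case (add x Y)
  have z: "coeff (lf Y) (Suc (size Y)) = 0" using degree_lf[of Y] by (simp add: coeff_eq_0)
  have "lf (add_mset x Y) = [:-x, 1:] * lf Y" by (simp only: lf_def image_mset_add_mset prod_mset.add_mset)
  hence "coeff (lf (add_mset x Y)) (Suc (size Y)) = - x * coeff (lf Y) (Suc (size Y)) + 1 * coeff (lf Y) (size Y)"
    by (simp only: coeff_lin_mult') simp
  thus ?case using add z by simp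
qed (simp add: lf_def)

lemma size_filter_image: "size (filter_mset P (image_mset f M)) = size (filter_mset (\<lambda>x. P (f x)) M)"
  by (simp add: image_mset_filter_mset_swap[symmetric])

lemma count_shift:
  fixes n :: nat and a b c :: complex and g s :: real
  assumes deg: "degree (jacobi n a b) = n" and n: "n \<ge> 1" and Bc: "b - a = (a + b + 2) * c"
    and g: "g > 0" and s: "s > 0"
    and big: "norm (a + b) > 2 * n + 2 * norm (1 - c^2) * n / g^2 + 2 * norm c * n / g"
  shows "real (size (filter_mset (\<lambda>x. exp 1 * s \<le> norm (x - c)) (proots (jacobi n a b)))) \<le> g * n / s"
proof -
  define p where "p = jacobi n a b"
  define X where "X = proots p"
  define L where "L = lead_coeff p"
  define Y where "Y = image_mset (\<lambda>x. x - c) X"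
  define Q where "Q = pcompose p [:c,1:]"
  have pnz: "p \<noteq> 0" using deg n by (auto simp: p_def)
  have Lnz: "L \<noteq> 0" using pnz by (simp add: L_def)
  have szX: "size X = n" using deg by (simp add: X_def p_def size_proots_complex)
  have szY: "size Y = n" using szX by (simp add: Y_def)
  have Qeq: "Q = smult L (lf Y)"
  proof -
    have "Q = pcompose (smult L (lf X)) [:c,1:]" unfolding Q_def L_def X_def using lf_proots[OF pnz] by simp
    thus ?thesis by (simp add: pcompose_smult lf_shift Y_def)
  qed
  have bn: "coeff Q n = L" using lead_lf[of Y] szY by (simp add: Qeq)
  have zero: "coeff Q k = 0" if "n < k" for k
    using that degree_lf[of Y] szY by (simp add: Qeq coeff_eq_0)
  have rec: "(1 - c^2) * of_nat (k+1) * of_nat (k+2) * coeff Q (k+2)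
      - 2 * c * of_nat k * of_nat (k+1) * coeff Q (k+1)
      + (of_nat n - of_nat k) * (of_nat n + of_nat k + (a + b) + 1) * coeff Q k = 0" for k
    unfolding Q_def p_def by (rule jac_shift_rec[OF Bc])
  have db: "norm (coeff Q k) \<le> norm (coeff Q n) * ((g * n) ^ (n - k) / fact (n - k))" if "k \<le> n" for k
    by (rule down_bound[where A="a+b"]) (use rec zero bn Lnz g n big that in \<open>simp_all add: add.assoc\<close>)
  have cY: "norm (coeff (lf Y) k) \<le> (g * size Y) ^ (size Y - k) / fact (size Y - k)" if "k \<le> size Y" for k
  proof -
    have h: "norm L * norm (coeff (lf Y) k) \<le> norm L * ((g * n) ^ (n - k) / fact (n - k))"
      using db[of k] that szY lead_lf[of Y] by (simp add: Qeq norm_mult)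
    have "norm (coeff (lf Y) k) \<le> (g * n) ^ (n - k) / fact (n - k)"
      by (rule mult_left_le_imp_le[OF h]) (use Lnz in simp)
    thus ?thesis using szY by simp
  qed
  have "real (size (filter_mset (\<lambda>y. exp 1 * s \<le> norm y) Y)) \<le> g * size Y / s"
    by (rule count_bound[OF s _ cY]) (use g in auto)
  thus ?thesis using szX unfolding Y_def size_filter_image by (simp add: X_def p_def)
qed

lemma count_escape:
  fixes n :: nat and a b :: complex and g s :: real
  assumes deg: "degree (jacobi n a b) = n" and n: "n \<ge> 1"
    and g: "g > 0" and s: "s > 0"
    and big: "norm (b - a) > g * n + (2 * n + norm (a + b)) / g"
  shows "poly (jacobi n a b) 0 \<noteq> 0 \<and> real (size (filter_mset (\<lambda>x. exp 1 * s \<le> norm (inverse x)) (proots (jacobi n a b)))) \<le> g * n / s"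
proof -
  define p where "p = jacobi n a b"
  define X where "X = proots p"
  define L where "L = lead_coeff p"
  define Y where "Y = image_mset inverse X"
  have pnz: "p \<noteq> 0" using deg n by (auto simp: p_def)
  have Lnz: "L \<noteq> 0" using pnz by (simp add: L_def)
  have szX: "size X = n" using deg by (simp add: X_def p_def size_proots_complex)
  have szY: "size Y = n" using szX by (simp add: Y_def)
  have peq: "p = smult L (lf X)" unfolding L_def X_def by (rule lf_proots[OF pnz])
  have an: "coeff p n \<noteq> 0" using deg Lnz by (simp add: L_def p_def)
  have zero: "coeff p k = 0" if "n < k" for k using that deg by (simp add: p_def coeff_eq_0)
  have rec: "of_nat (k+1) * of_nat (k+2) * coeff p (k+2) + (b - a) * of_nat (k+1) * coeff p (k+1)
      + (of_nat n - of_nat k) * (of_nat n + of_nat k + (a + b) + 1) * coeff p k = 0" for k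
    unfolding p_def by (rule jac_rec0)
  have ub: "norm (coeff p k) \<le> norm (coeff p 0) * ((g * n) ^ k / fact k)" if "k \<le> n" for k
    by (rule up_bound[where A="a+b" and B="b-a"]) (use rec zero an g n big that in \<open>simp_all add: add.assoc\<close>)
  have a0: "coeff p 0 \<noteq> 0"
  proof
    assume "coeff p 0 = 0"
    hence "norm (coeff p n) \<le> 0" using ub[of n] by simp
    thus False using an by simp
  qed
  have X0: "0 \<notin># X"
  proof
    assume "0 \<in># X"
    hence "poly p 0 = 0" using pnz by (simp add: X_def)
    thus False using a0 by (simp add: poly_0_coeff_0)
  qed
  have cX: "coeff (lf X) k = coeff p k / L" for k using Lnz by (subst peq) simp
  have cY: "norm (coeff (lf Y) k) \<le> (g * size Y) ^ (size Y - k) / fact (size Y - k)" if "k \<le> size Y" for k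
  proof -
    have "coeff (lf Y) k = coeff p (n - k) / coeff p 0"
      using coeff_lf_inv[OF X0, of k] that szX szY Lnz unfolding Y_def cX by simp
    hence "norm (coeff (lf Y) k) = norm (coeff p (n - k)) / norm (coeff p 0)" by (simp add: norm_divide)
    also have "\<dots> \<le> (g * n) ^ (n - k) / fact (n - k)"
      using ub[of "n - k"] a0 by (simp add: divide_le_eq mult.commute)
    finally show ?thesis using szY by simp
  qed
  have "real (size (filter_mset (\<lambda>y. exp 1 * s \<le> norm y) Y)) \<le> g * size Y / s"
    by (rule count_bound[OF s _ cY]) (use g in auto)
  hence "real (size (filter_mset (\<lambda>x. exp 1 * s \<le> norm (inverse x)) (proots (jacobi n a b)))) \<le> g * n / s"
    using szX unfolding Y_def size_filter_image by (simp add: X_def p_def)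
  moreover have "poly (jacobi n a b) 0 \<noteq> 0" using a0 by (simp add: p_def poly_0_coeff_0)
  ultimately show ?thesis by simp
qed


lemma sum_mset_abs_le:
  fixes g :: "'a \<Rightarrow> real"
  shows "\<bar>sum_mset (image_mset g X)\<bar> \<le> sum_mset (image_mset (\<lambda>x. \<bar>g x\<bar>) X)"
  by (induction X) (auto intro: order_trans[OF abs_triangle_ineq])

lemma sum_mset_le:
  fixes g h :: "'a \<Rightarrow> real"
  assumes "\<And>x. x \<in># X \<Longrightarrow> g x \<le> h x"
  shows "sum_mset (image_mset g X) \<le> sum_mset (image_mset h X)"
  using assms by (induction X) (auto intro: add_mono)

lemma sum_mset_indic:
  fixes a b :: real
  shows "sum_mset (image_mset (\<lambda>x. a + (if P x then b else 0)) X) = a * size X + b * size (filter_mset P X)"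
  by (induction X) (auto simp: algebra_simps)

lemma size_filter_mono:
  assumes "\<And>x. x \<in># X \<Longrightarrow> P x \<Longrightarrow> Q x"
  shows "size (filter_mset P X) \<le> size (filter_mset Q X)"
  using assms by (induction X) auto

lemma root_integral_one:
  assumes "degree (p :: complex poly) \<ge> 1"
  shows "root_integral p (\<lambda>_. 1) = 1"
proof -
  have "p \<noteq> 0" using assms by auto
  thus ?thesis using assms by (simp add: root_integral_mset size_proots_complex)
qed

lemma conc:
  fixes q :: "nat \<Rightarrow> complex poly" and c :: "nat \<Rightarrow> complex"
  assumes degpos: "eventually (\<lambda>m. degree (q m) \<ge> 1) sequentially"
    and c: "c \<longlonglongrightarrow> \<kappa>"
    and cnt: "\<And>\<rho> \<epsilon>::real. \<rho> > 0 \<Longrightarrow> \<epsilon> > 0 \<Longrightarrow> eventually (\<lambda>m. real (size (filter_mset (\<lambda>x. \<rho> \<le> norm (x - c m)) (proots (q m)))) \<le> \<epsilon> * real (degree (q m))) sequentially"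
  shows "roots_weak_conv q (return borel \<kappa>)"
  unfolding roots_weak_conv_def
proof (intro allI impI)
  fix f :: "complex \<Rightarrow> real"
  assume f: "continuous_on UNIV f \<and> bounded (range f)"
  have int: "integral\<^sup>L (return borel \<kappa>) f = f \<kappa>"
    by (rule integral_return) (use f borel_measurable_continuous_onI in auto)
  obtain M where M: "\<And>x. \<bar>f x\<bar> \<le> M" using f unfolding bounded_iff by auto
  have M0: "M \<ge> 0" using M[of 0] by simp
  have "(\<lambda>m. root_integral (q m) f) \<longlonglongrightarrow> f \<kappa>"
  proof (rule LIMSEQ_I)
    fix e :: real assume e: "e > 0"
    have "isCont f \<kappa>" using f by (simp add: continuous_on_eq_continuous_at)
    then obtain \<delta> where \<delta>: "\<delta> > 0" "\<And>x. dist x \<kappa> < \<delta> \<Longrightarrow> dist (f x) (f \<kappa>) < e / 2"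
      using e unfolding continuous_at_eps_delta by (metis half_gt_zero)
    define \<epsilon> where "\<epsilon> = e / (4 * (M + 1))"
    have \<epsilon>: "\<epsilon> > 0" using e M0 by (simp add: \<epsilon>_def)
    have ev1: "eventually (\<lambda>m. dist (c m) \<kappa> < \<delta> / 2) sequentially"
      using tendstoD[OF c, of "\<delta> / 2"] \<delta> by simp
    have ev2: "eventually (\<lambda>m. real (size (filter_mset (\<lambda>x. \<delta> / 2 \<le> norm (x - c m)) (proots (q m)))) \<le> \<epsilon> * degree (q m)) sequentially"
      using cnt[of "\<delta> / 2" \<epsilon>] \<delta> \<epsilon> by simp
    obtain N where N: "\<And>m. m \<ge> N \<Longrightarrow> dist (c m) \<kappa> < \<delta> / 2 \<and> degree (q m) \<ge> 1 \<and>
        real (size (filter_mset (\<lambda>x. \<delta> / 2 \<le> norm (x - c m)) (proots (q m)))) \<le> \<epsilon> * degree (q m)"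
      using eventually_conj[OF ev1 eventually_conj[OF degpos ev2]] unfolding eventually_sequentially by blast
    show "\<exists>N. \<forall>m\<ge>N. norm (root_integral (q m) f - f \<kappa>) < e"
    proof (intro exI allI impI)
      fix m assume m: "m \<ge> N"
      define X where "X = proots (q m)"
      define d where "d = degree (q m)"
      have d1: "d \<ge> 1" using N[OF m] by (simp add: d_def)
      have qnz: "q m \<noteq> 0" using d1 by (auto simp: d_def)
      have szX: "size X = d" by (simp add: X_def d_def size_proots_complex)
      have cnt': "real (size (filter_mset (\<lambda>x. \<delta> / 2 \<le> norm (x - c m)) X)) \<le> \<epsilon> * d"
        using N[OF m] by (simp add: X_def d_def)
      have trm: "\<bar>f x - f \<kappa>\<bar> \<le> e / 2 + (if \<delta> / 2 \<le> norm (x - c m) then 2 * M else 0)" for x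
      proof (cases "\<delta> / 2 \<le> norm (x - c m)")
        case True
        have "\<bar>f x - f \<kappa>\<bar> \<le> \<bar>f x\<bar> + \<bar>f \<kappa>\<bar>" by simp
        also have "\<dots> \<le> 2 * M" using M[of x] M[of \<kappa>] by simp
        finally show ?thesis using True e by simp
      next
        case False
        have "dist x \<kappa> \<le> dist x (c m) + dist (c m) \<kappa>" by (rule dist_triangle)
        also have "\<dots> < \<delta>" using False N[OF m] by (simp add: dist_norm)
        finally have "dist (f x) (f \<kappa>) < e / 2" by (rule \<delta>(2))
        thus ?thesis using False by (simp add: dist_real_def)
      qed
      have "root_integral (q m) f - f \<kappa> = sum_mset (image_mset (\<lambda>x. f x - f \<kappa>) X) / d"
      proof -
        have "sum_mset (image_mset (\<lambda>x. f x - f \<kappa>) X) = sum_mset (image_mset f X) - d * f \<kappa>"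
          using szX by (induction X arbitrary: d) (auto simp: algebra_simps)
        thus ?thesis using d1 qnz by (simp add: root_integral_mset X_def d_def field_simps)
      qed
      hence "\<bar>root_integral (q m) f - f \<kappa>\<bar> = \<bar>sum_mset (image_mset (\<lambda>x. f x - f \<kappa>) X)\<bar> / d"
        using d1 by simp
      also have "\<dots> \<le> sum_mset (image_mset (\<lambda>x. e / 2 + (if \<delta> / 2 \<le> norm (x - c m) then 2 * M else 0)) X) / d"
        using d1 by (intro divide_right_mono order_trans[OF sum_mset_abs_le] sum_mset_le trm) auto
      also have "\<dots> = (e / 2 * d + 2 * M * size (filter_mset (\<lambda>x. \<delta> / 2 \<le> norm (x - c m)) X)) / d"
        by (simp add: sum_mset_indic szX)
      also have "\<dots> \<le> (e / 2 * d + 2 * M * (\<epsilon> * d)) / d"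
        using cnt' M0 d1 by (intro divide_right_mono add_left_mono mult_left_mono) auto
      also have "\<dots> = e / 2 + 2 * M * \<epsilon>" using d1 by (simp add: field_simps)
      also have "\<dots> < e"
      proof -
        have "2 * M * \<epsilon> = e / 2 * (M / (M + 1))" using M0 by (simp add: \<epsilon>_def field_simps)
        also have "\<dots> < e / 2" using e M0 by (simp add: field_simps)
        finally show ?thesis by simp
      qed
      finally show "norm (root_integral (q m) f - f \<kappa>) < e" by simp
    qed
  qed
  thus "(\<lambda>m. root_integral (q m) f) \<longlonglongrightarrow> integral\<^sup>L (return borel \<kappa>) f" unfolding int .
qed


lemma escape_false:
  fixes p :: "nat \<Rightarrow> complex poly" and r :: "nat \<Rightarrow> nat"
  assumes cs: "compactly_supported \<mu>" and wc: "roots_weak_conv p \<mu>"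
    and deg: "\<And>n. degree (p n) = n" and r: "strict_mono r"
    and cnt: "\<And>\<rho> \<epsilon>::real. \<rho> > 0 \<Longrightarrow> \<epsilon> > 0 \<Longrightarrow> eventually (\<lambda>m. real (size (filter_mset (\<lambda>x. norm x \<le> \<rho>) (proots (p (r m))))) \<le> \<epsilon> * real (r m)) sequentially"
  shows False
proof -
  obtain K where sets: "sets \<mu> = sets borel" and fin: "finite_measure \<mu>" and K: "compact K" and K0: "emeasure \<mu> (UNIV - K) = 0"
    using cs unfolding compactly_supported_def by blast
  have space: "space \<mu> = UNIV" using sets_eq_imp_space_eq[OF sets] by simp
  obtain R0 where R0: "\<And>x. x \<in> K \<Longrightarrow> norm x \<le> R0" using compact_imp_bounded[OF K] unfolding bounded_iff by auto
  define R where "R = max R0 0"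
  have R: "\<And>x. x \<in> K \<Longrightarrow> norm x \<le> R" using R0 by (force simp: R_def)
  have Rp: "R + 1 > 0" by (simp add: R_def)
  define g where "g x = max 0 (min 1 (R + 1 - norm x))" for x :: complex
  have gc: "continuous_on UNIV g" unfolding g_def by (intro continuous_intros)
  have gb: "bounded (range g)" unfolding bounded_iff g_def by (intro exI[of _ 1]) auto
  have gm: "g \<in> borel_measurable \<mu>"
    using borel_measurable_continuous_onI[OF gc] measurable_cong_sets[OF sets refl] by blast
  have onem: "(\<lambda>_. 1::real) \<in> borel_measurable \<mu>" by simp
  have ae: "AE x in \<mu>. g x = 1"
  proof (rule AE_I')
    show "UNIV - K \<in> null_sets \<mu>"
      using K0 sets compact_imp_closed[OF K] by (simp add: null_sets_def borel_closed)
    show "{x \<in> space \<mu>. \<not> g x = 1} \<subseteq> UNIV - K"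
      using R by (auto simp: g_def)
  qed
  have "integral\<^sup>L \<mu> g = integral\<^sup>L \<mu> (\<lambda>_. 1)" by (rule integral_cong_AE[OF gm onem ae])
  moreover have "integral\<^sup>L \<mu> (\<lambda>_. 1::real) = 1"
  proof -
    have c1: "continuous_on UNIV (\<lambda>_::complex. 1::real)" by simp
    have b1: "bounded (range (\<lambda>_::complex. 1::real))" by simp
    have l1: "(\<lambda>n. root_integral (p n) (\<lambda>_. 1)) \<longlonglongrightarrow> integral\<^sup>L \<mu> (\<lambda>_. 1)"
      by (rule wc[unfolded roots_weak_conv_def, rule_format]) (use c1 b1 in blast)
    have l2: "(\<lambda>n. root_integral (p n) (\<lambda>_. 1)) \<longlonglongrightarrow> 1"
    proof (rule tendsto_eventually)
      show "eventually (\<lambda>n. root_integral (p n) (\<lambda>_. 1) = 1) sequentially"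
        using eventually_ge_at_top[of 1] by eventually_elim (simp add: root_integral_one deg)
    qed
    show ?thesis using LIMSEQ_unique[OF l1 l2] .
  qed
  ultimately have ig: "integral\<^sup>L \<mu> g = 1" by simp
  have lg: "(\<lambda>m. root_integral (p (r m)) g) \<longlonglongrightarrow> 1"
  proof -
    have "(\<lambda>n. root_integral (p n) g) \<longlonglongrightarrow> integral\<^sup>L \<mu> g"
      using wc gc gb unfolding roots_weak_conv_def by auto
    thus ?thesis using LIMSEQ_subseq_LIMSEQ[OF _ r] ig by (simp add: o_def)
  qed
  have ev1: "eventually (\<lambda>m. root_integral (p (r m)) g > 1/2) sequentially"
    using order_tendstoD(1)[OF lg, of "1/2"] by simp
  have ev2: "eventually (\<lambda>m. real (size (filter_mset (\<lambda>x. norm x \<le> R + 1) (proots (p (r m))))) \<le> 1/4 * real (r m)) sequentially"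
    using cnt[of "R + 1" "1/4"] Rp by simp
  obtain m where m: "root_integral (p (r m)) g > 1/2"
    "real (size (filter_mset (\<lambda>x. norm x \<le> R + 1) (proots (p (r m))))) \<le> 1/4 * real (r m)" "r m \<ge> 1"
  proof -
    have "eventually (\<lambda>m. r m \<ge> 1) sequentially"
      using eventually_ge_at_top[of 1] by eventually_elim (meson le_trans r seq_suble)
    from eventually_conj[OF ev1 eventually_conj[OF ev2 this]] obtain N where
      "\<And>m. m \<ge> N \<Longrightarrow> root_integral (p (r m)) g > 1/2 \<and>
         real (size (filter_mset (\<lambda>x. norm x \<le> R + 1) (proots (p (r m))))) \<le> 1/4 * real (r m) \<and> r m \<ge> 1"
      unfolding eventually_sequentially by blast
    thus ?thesis using that[of N] by blast
  qed
  define X where "X = proots (p (r m))"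
  have pnz: "p (r m) \<noteq> 0" using m(3) deg[of "r m"] by auto
  have "root_integral (p (r m)) g = sum_mset (image_mset g X) / real (r m)"
    using pnz deg by (simp add: root_integral_mset X_def)
  also have "\<dots> \<le> sum_mset (image_mset (\<lambda>x. 0 + (if norm x \<le> R + 1 then 1 else 0)) X) / real (r m)"
    by (rule divide_right_mono, rule sum_mset_le) (auto simp: g_def)
  also have "\<dots> = real (size (filter_mset (\<lambda>x. norm x \<le> R + 1) X)) / real (r m)"
    by (simp only: sum_mset_indic) simp
  also have "\<dots> \<le> 1/4" using m(2,3) by (simp add: X_def divide_le_eq)
  finally show False using m(1) by simp
qed


primrec sub_r :: "(nat \<Rightarrow> real) \<Rightarrow> nat \<Rightarrow> nat" where
  "sub_r g 0 = (SOME n. n > 0 \<and> g n > 0)"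
| "sub_r g (Suc m) = (SOME n. n > sub_r g m \<and> g n > real (Suc m))"

lemma unbounded_subseq:
  fixes f :: "nat \<Rightarrow> 'a::real_normed_vector"
  assumes nb: "\<not> bounded (range f)"
  shows "\<exists>r. strict_mono r \<and> filterlim (\<lambda>m. norm (f (r m))) at_top sequentially"
proof -
  have ex: "\<exists>n>N. norm (f n) > K" for N K
  proof (rule ccontr)
    assume "\<not> (\<exists>n>N. norm (f n) > K)"
    hence h: "\<And>n. n > N \<Longrightarrow> norm (f n) \<le> K" by auto
    define B where "B = max K (Max ((\<lambda>i. norm (f i)) ` {..N}))"
    have "norm (f n) \<le> B" for n
    proof (cases "n \<le> N")
      case True
      hence "norm (f n) \<le> Max ((\<lambda>i. norm (f i)) ` {..N})" by (intro Max_ge) auto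
      thus ?thesis by (simp add: B_def)
    next
      case False thus ?thesis using h[of n] by (simp add: B_def)
    qed
    hence "bounded (range f)" unfolding bounded_iff by auto
    thus False using nb by simp
  qed
  define g where "g n = norm (f n)" for n
  define r where "r = sub_r g"
  have r0: "g (r 0) > 0" unfolding r_def sub_r.simps using someI_ex[OF ex[of 0 0]] by (simp add: g_def)
  have rs: "r (Suc m) > r m \<and> g (r (Suc m)) > real (Suc m)" for m
    unfolding r_def sub_r.simps using someI_ex[OF ex[of "sub_r g m" "real (Suc m)"]] by (simp add: g_def)
  have sm: "strict_mono r" unfolding strict_mono_Suc_iff using rs by blast
  have gm: "g (r m) \<ge> real m - 1" for m
  proof (cases m)
    case 0 thus ?thesis using r0 by simp
  next
    case (Suc k) thus ?thesis using rs[of k] by simp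
  qed
  have "filterlim (\<lambda>m. norm (f (r m))) at_top sequentially"
    unfolding filterlim_at_top
  proof
    fix Z :: real
    show "eventually (\<lambda>m. Z \<le> norm (f (r m))) sequentially"
      unfolding eventually_sequentially
    proof (intro exI allI impI)
      fix m assume m: "m \<ge> nat \<lceil>Z\<rceil> + 1"
      have "Z \<le> real m - 1" using m by linarith
      thus "Z \<le> norm (f (r m))" using gm[of m] by (simp add: g_def)
    qed
  qed
  thus ?thesis using sm by blast
qed

lemma ev_ge1:
  assumes "strict_mono (r :: nat \<Rightarrow> nat)"
  shows "eventually (\<lambda>m. r m \<ge> 1) sequentially"
  using eventually_ge_at_top[of 1] by eventually_elim (meson le_trans assms seq_suble)

lemma escape_case:
  fixes \<alpha> \<beta> :: "nat \<Rightarrow> complex" and p :: "nat \<Rightarrow> complex poly"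
  assumes p_def: "\<And>n. p n = jacobi n (\<alpha> n) (\<beta> n)"
    and deg: "\<And>n. degree (p n) = n"
    and cs: "compactly_supported \<mu>" and wc: "roots_weak_conv p \<mu>"
    and r: "strict_mono r"
    and hB: "filterlim (\<lambda>m. norm (\<beta> (r m) - \<alpha> (r m)) / (2 * real (r m) + norm (\<alpha> (r m) + \<beta> (r m)))) at_top sequentially"
  shows False
proof (rule escape_false[OF cs wc deg r])
  fix \<rho> \<epsilon> :: real assume \<rho>: "\<rho> > 0" and \<epsilon>: "\<epsilon> > 0"
  define s where "s = 1 / (exp 1 * \<rho>)"
  define g where "g = \<epsilon> * s"
  have s: "s > 0" using \<rho> by (simp add: s_def)
  have g: "g > 0" using s \<epsilon> by (simp add: g_def)
  have es: "exp 1 * s = 1 / \<rho>" using \<rho> by (simp add: s_def)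
  have ev: "eventually (\<lambda>m. g + 1/g + 1 \<le> norm (\<beta> (r m) - \<alpha> (r m)) / (2 * real (r m) + norm (\<alpha> (r m) + \<beta> (r m)))) sequentially"
    using hB unfolding filterlim_at_top by blast
  show "eventually (\<lambda>m. real (size (filter_mset (\<lambda>x. norm x \<le> \<rho>) (proots (p (r m))))) \<le> \<epsilon> * real (r m)) sequentially"
    using eventually_conj[OF ev ev_ge1[OF r]]
  proof eventually_elim
    case (elim m)
    define n where "n = r m"
    define a where "a = \<alpha> n"
    define b where "b = \<beta> n"
    define D where "D = 2 * real n + norm (a + b)"
    have n1: "n \<ge> 1" using elim by (simp add: n_def)
    have D1: "D > 0" unfolding D_def using n1 by (intro add_pos_nonneg) auto
    have D2: "D \<ge> real n" unfolding D_def using norm_ge_zero[of "a+b"] by linarith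
    note D = D1 D2
    have ratio: "g + 1/g + 1 \<le> norm (b - a) / D" using elim by (simp add: D_def a_def b_def n_def)
    hence bD: "(g + 1/g + 1) * D \<le> norm (b - a)" using D by (simp add: le_divide_eq)
    have big: "norm (b - a) > g * n + (2 * n + norm (a + b)) / g"
    proof -
      have "g * n \<le> g * D" using D g by simp
      moreover have "(2 * n + norm (a + b)) / g = D / g" by (simp add: D_def)
      ultimately have "g * n + (2 * n + norm (a + b)) / g < g * D + D / g + D" using D by linarith
      also have "\<dots> = (g + 1/g + 1) * D" by (simp add: algebra_simps)
      finally show ?thesis using bD by simp
    qed
    have dj: "degree (jacobi n a b) = n" using deg[of n] p_def[of n] by (simp add: a_def b_def)
    note ce = count_escape[OF dj n1 g s big]
    have "real (size (filter_mset (\<lambda>x. norm x \<le> \<rho>) (proots (jacobi n a b))))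
        \<le> real (size (filter_mset (\<lambda>x. exp 1 * s \<le> norm (inverse x)) (proots (jacobi n a b))))"
    proof (intro of_nat_mono size_filter_mono)
      fix x assume x: "x \<in># proots (jacobi n a b)" "norm x \<le> \<rho>"
      have pnz: "jacobi n a b \<noteq> 0" using dj n1 by auto
      have "poly (jacobi n a b) x = 0" using x(1) pnz by simp
      hence x0: "x \<noteq> 0" using ce by auto
      have "1 / \<rho> \<le> 1 / norm x" using x(2) x0 \<rho> by (simp add: frac_le)
      thus "exp 1 * s \<le> norm (inverse x)" using es by (simp add: norm_inverse divide_inverse)
    qed
    also have "\<dots> \<le> g * n / s" using ce by simp
    also have "\<dots> = \<epsilon> * n" using s by (simp add: g_def)
    finally show ?case using p_def[of n] by (simp add: n_def a_def b_def)
  qed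
qed


lemma conc_case:
  fixes \<alpha> \<beta> :: "nat \<Rightarrow> complex" and p :: "nat \<Rightarrow> complex poly"
  assumes p_def: "\<And>n. p n = jacobi n (\<alpha> n) (\<beta> n)"
    and deg: "\<And>n. degree (p n) = n"
    and r: "strict_mono r"
    and hA: "filterlim (\<lambda>m. norm (\<alpha> (r m) + \<beta> (r m)) / real (r m)) at_top sequentially"
    and hw: "(\<lambda>m. (\<beta> (r m) - \<alpha> (r m)) / (\<alpha> (r m) + \<beta> (r m))) \<longlonglongrightarrow> \<kappa>"
  shows "roots_weak_conv (\<lambda>m. p (r m)) (return borel \<kappa>)"
proof -
  define A where "A m = \<alpha> (r m) + \<beta> (r m)" for m
  define B where "B m = \<beta> (r m) - \<alpha> (r m)" for m
  define c where "c m = B m / (A m + 2)" for m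
  note ev1 = ev_ge1[OF r]
  have nA: "filterlim (\<lambda>m. norm (A m)) at_top sequentially"
  proof (rule filterlim_at_top_mono[OF hA])
    show "eventually (\<lambda>m. norm (\<alpha> (r m) + \<beta> (r m)) / real (r m) \<le> norm (A m)) sequentially"
      using ev1 by eventually_elim (auto simp: A_def divide_le_eq mult_le_cancel_left1)
  qed
  have Ainf: "filterlim (\<lambda>m. A m + 2) at_infinity sequentially"
  proof -
    have "filterlim A at_infinity sequentially" using nA by (simp add: filterlim_at_infinity_conv_norm_at_top)
    hence "filterlim (\<lambda>m. 2 + A m) at_infinity sequentially"
      by (rule tendsto_add_filterlim_at_infinity[OF tendsto_const])
    thus ?thesis by (simp add: add.commute)
  qed
  have inv0: "(\<lambda>m. inverse (A m + 2)) \<longlonglongrightarrow> 0"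
    using filterlim_compose[OF tendsto_inverse_0 Ainf] by (simp add: o_def)
  have evA: "eventually (\<lambda>m. norm (A m) > 2) sequentially"
    using nA unfolding filterlim_at_top_dense by blast
  have cc: "c \<longlonglongrightarrow> \<kappa>"
  proof -
    have "(\<lambda>m. (B m / A m) * (1 - 2 * inverse (A m + 2))) \<longlonglongrightarrow> \<kappa> * (1 - 2 * 0)"
      using hw inv0 unfolding A_def B_def by (intro tendsto_intros) auto
    moreover have "eventually (\<lambda>m. (B m / A m) * (1 - 2 * inverse (A m + 2)) = c m) sequentially"
      using evA
    proof eventually_elim
      case (elim m)
      have a0: "A m \<noteq> 0" using elim by auto
      have a2: "A m + 2 \<noteq> 0"
      proof
        assume "A m + 2 = 0" hence "A m = -2" by (simp add: eq_neg_iff_add_eq_0)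
        thus False using elim by simp
      qed
      show ?case using a0 a2 by (simp add: c_def field_simps)
    qed
    ultimately show ?thesis by (simp add: tendsto_cong)
  qed
  show ?thesis
  proof (rule conc[OF _ cc])
    show "eventually (\<lambda>m. degree (p (r m)) \<ge> 1) sequentially" using ev1 by (simp add: deg)
  next
    fix \<rho> \<epsilon> :: real assume \<rho>: "\<rho> > 0" and \<epsilon>: "\<epsilon> > 0"
    define s where "s = \<rho> / exp 1"
    define g where "g = \<epsilon> * s"
    define Mc where "Mc = norm \<kappa> + 1"
    have s: "s > 0" using \<rho> by (simp add: s_def)
    have g: "g > 0" using s \<epsilon> by (simp add: g_def)
    have es: "exp 1 * s = \<rho>" by (simp add: s_def)
    have Mc: "Mc \<ge> 0" by (simp add: Mc_def)
    have evc: "eventually (\<lambda>m. norm (c m) \<le> Mc) sequentially"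
    proof -
      have "eventually (\<lambda>m. dist (c m) \<kappa> < 1) sequentially" using tendstoD[OF cc, of 1] by simp
      thus ?thesis
      proof eventually_elim
        case (elim m)
        have "norm (c m) \<le> norm (c m - \<kappa>) + norm \<kappa>" using norm_triangle_ineq[of "c m - \<kappa>" \<kappa>] by simp
        thus ?case using elim by (simp add: Mc_def dist_norm)
      qed
    qed
    define Z where "Z = 2 + 2 * (1 + Mc^2) / g^2 + 2 * Mc / g + 1"
    have evZ: "eventually (\<lambda>m. Z \<le> norm (\<alpha> (r m) + \<beta> (r m)) / real (r m)) sequentially"
      using hA unfolding filterlim_at_top by blast
    show "eventually (\<lambda>m. real (size (filter_mset (\<lambda>x. \<rho> \<le> norm (x - c m)) (proots (p (r m))))) \<le> \<epsilon> * real (degree (p (r m)))) sequentially"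
      using eventually_conj[OF evZ eventually_conj[OF evc eventually_conj[OF ev1 evA]]]
    proof eventually_elim
      case (elim m)
      define n where "n = r m"
      define a where "a = \<alpha> n"
      define b where "b = \<beta> n"
      define cm where "cm = c m"
      have n1: "n \<ge> 1" using elim by (simp add: n_def)
      have nA2: "norm (a + b) > 2" using elim by (simp add: A_def a_def b_def n_def)
      have a2: "a + b + 2 \<noteq> 0"
      proof
        assume "a + b + 2 = 0" hence "a + b = -2" by (simp add: eq_neg_iff_add_eq_0)
        thus False using nA2 by simp
      qed
      have Bc: "b - a = (a + b + 2) * cm" using a2 by (simp add: cm_def c_def A_def B_def a_def b_def n_def)
      have cmM: "norm cm \<le> Mc" using elim by (simp add: cm_def)
      have ZA: "Z * n \<le> norm (a + b)" using elim n1 by (simp add: a_def b_def n_def le_divide_eq)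
      have big: "norm (a + b) > 2 * n + 2 * norm (1 - cm^2) * n / g^2 + 2 * norm cm * n / g"
      proof -
        have t1: "norm (1 - cm^2) \<le> 1 + Mc^2"
        proof -
          have "norm (1 - cm^2) \<le> norm (1::complex) + norm (cm^2)" by (rule norm_triangle_ineq4)
          also have "\<dots> = 1 + (norm cm)^2" by (simp add: norm_power)
          also have "\<dots> \<le> 1 + Mc^2" using cmM by (simp add: power_mono)
          finally show ?thesis .
        qed
        have "2 * norm (1 - cm^2) * n / g^2 \<le> 2 * (1 + Mc^2) * n / g^2"
          using t1 g n1 by (simp add: divide_right_mono mult_right_mono)
        moreover have "2 * norm cm * n / g \<le> 2 * Mc * n / g"
          using cmM g n1 by (simp add: divide_right_mono mult_right_mono)
        moreover have "2 * n + 2 * (1 + Mc^2) * n / g^2 + 2 * Mc * n / g < Z * n"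
          using n1 by (simp add: Z_def algebra_simps)
        ultimately show ?thesis using ZA by linarith
      qed
      have dj: "degree (jacobi n a b) = n" using deg[of n] p_def[of n] by (simp add: a_def b_def)
      have "real (size (filter_mset (\<lambda>x. exp 1 * s \<le> norm (x - cm)) (proots (jacobi n a b)))) \<le> g * n / s"
        by (rule count_shift[OF dj n1 Bc g s big])
      also have "\<dots> = \<epsilon> * n" using s by (simp add: g_def)
      finally show ?case using p_def[of n] deg[of n] es by (simp add: n_def a_def b_def cm_def)
    qed
  qed
qed


lemma norm_div_nat: "norm (x / (of_nat n :: complex)) = norm x / real n"
  by (simp add: norm_divide)

lemma subseq_at_top:
  assumes "filterlim f at_top sequentially" "strict_mono (s :: nat \<Rightarrow> nat)"
  shows "filterlim (\<lambda>m. f (s m)) at_top sequentially"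
  using filterlim_compose[OF assms(1) filterlim_subseq[OF assms(2)]] by (simp add: o_def)

theorem lemma3:
  fixes \<alpha> \<beta> :: "nat \<Rightarrow> complex" and p :: "nat \<Rightarrow> complex poly"
    and \<mu> \<mu>' :: "complex measure"
  assumes p_def: "\<And>n. p n = jacobi n (\<alpha> n) (\<beta> n)"
    and deg: "\<And>n. degree (p n) = n"
    and mu: "compactly_supported \<mu>" "roots_weak_conv p \<mu>"
    and mu': "compactly_supported \<mu>'" "roots_weak_conv (\<lambda>n. pderiv (p n)) \<mu>'"
  shows "(bounded (range (\<lambda>n. (\<alpha> n + \<beta> n) / of_nat n)) \<and>
          bounded (range (\<lambda>n. (\<beta> n - \<alpha> n) / of_nat n)))
       \<or> (\<not> bounded (range (\<lambda>n. (\<alpha> n + \<beta> n) / of_nat n)) \<and>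
          bounded (range (\<lambda>n. (\<beta> n - \<alpha> n) / of_nat n)) \<and>
          roots_weak_conv p (return borel 0))
       \<or> (\<not> bounded (range (\<lambda>n. (\<alpha> n + \<beta> n) / of_nat n)) \<and>
          \<not> bounded (range (\<lambda>n. (\<beta> n - \<alpha> n) / of_nat n)) \<and>
          (\<exists>\<kappa> :: complex. \<exists>r :: nat \<Rightarrow> nat. strict_mono r \<and>
             (\<lambda>m. (\<beta> (r m) - \<alpha> (r m)) / (\<alpha> (r m) + \<beta> (r m))) \<longlonglongrightarrow> \<kappa> \<and>
             roots_weak_conv (\<lambda>m. p (r m)) (return borel \<kappa>)))"
proof -
  define fA where "fA n = (\<alpha> n + \<beta> n) / of_nat n" for n
  define fB where "fB n = (\<beta> n - \<alpha> n) / of_nat n" for n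
  note esc = escape_case[OF p_def deg mu(1) mu(2)]
  note con = conc_case[OF p_def deg]
  show ?thesis
  proof (cases "bounded (range fA)")
    case bA: True
    show ?thesis
    proof (cases "bounded (range fB)")
      case True thus ?thesis using bA unfolding fA_def fB_def by blast
    next
      case nbB: False
      obtain Ma where Ma: "\<And>n. norm (fA n) \<le> Ma" using bA unfolding bounded_iff by auto
      have Ma0: "Ma \<ge> 0" using Ma[of 0] norm_ge_zero[of "fA 0"] by linarith
      obtain r where r: "strict_mono r" and rB: "filterlim (\<lambda>m. norm (fB (r m))) at_top sequentially"
        using unbounded_subseq[OF nbB] by blast
      have "filterlim (\<lambda>m. norm (\<beta> (r m) - \<alpha> (r m)) / (2 * real (r m) + norm (\<alpha> (r m) + \<beta> (r m)))) at_top sequentially"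
        unfolding filterlim_at_top
      proof
        fix Z :: real
        have "eventually (\<lambda>m. Z * (2 + Ma) \<le> norm (fB (r m))) sequentially"
          using rB unfolding filterlim_at_top by blast
        thus "eventually (\<lambda>m. Z \<le> norm (\<beta> (r m) - \<alpha> (r m)) / (2 * real (r m) + norm (\<alpha> (r m) + \<beta> (r m)))) sequentially"
          using ev_ge1[OF r]
        proof eventually_elim
          case (elim m)
          define n where "n = r m"
          have n1: "real n \<ge> 1" using elim by (simp add: n_def)
          have eA: "norm (\<alpha> n + \<beta> n) = real n * norm (fA n)" using n1 by (simp add: fA_def norm_div_nat)
          have eB: "norm (\<beta> n - \<alpha> n) = real n * norm (fB n)" using n1 by (simp add: fB_def norm_div_nat)
          have D: "2 * real n + norm (\<alpha> n + \<beta> n) \<le> real n * (2 + Ma)"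
            using eA Ma[of n] n1 by (simp add: algebra_simps mult_left_mono)
          have Dp: "2 * real n + norm (\<alpha> n + \<beta> n) > 0" using n1 norm_ge_zero[of "\<alpha> n + \<beta> n"] by linarith
          show ?case
          proof (cases "Z \<le> 0")
            case True
            have "0 \<le> norm (\<beta> n - \<alpha> n) / (2 * real n + norm (\<alpha> n + \<beta> n))" using Dp by simp
            hence "0 \<le> norm (\<beta> (r m) - \<alpha> (r m)) / (2 * real (r m) + norm (\<alpha> (r m) + \<beta> (r m)))" by (simp add: n_def)
            thus ?thesis using True by linarith
          next
            case False
            have "Z * (2 * real n + norm (\<alpha> n + \<beta> n)) \<le> Z * (real n * (2 + Ma))"
              using D False by (simp add: mult_left_mono)
            also have "\<dots> = real n * (Z * (2 + Ma))" by simp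
            also have "\<dots> \<le> real n * norm (fB n)" using elim n1 by (simp add: n_def mult_left_mono)
            finally show ?thesis using Dp eB by (simp add: n_def[symmetric] le_divide_eq)
          qed
        qed
      qed
      hence False by (rule esc[OF r])
      thus ?thesis ..
    qed
  next
    case nbA: False
    obtain r where r: "strict_mono r" and rA: "filterlim (\<lambda>m. norm (fA (r m))) at_top sequentially"
      using unbounded_subseq[OF nbA] by blast
    define w where "w m = (\<beta> (r m) - \<alpha> (r m)) / (\<alpha> (r m) + \<beta> (r m))" for m
    have hA: "filterlim (\<lambda>m. norm (\<alpha> (r m) + \<beta> (r m)) / real (r m)) at_top sequentially"
      using rA by (simp add: fA_def norm_div_nat)
    show ?thesis
    proof (cases "bounded (range w)")
      case bw: True
      obtain \<kappa> s where s: "strict_mono s" and ws: "(w \<circ> s) \<longlonglongrightarrow> \<kappa>"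
      proof -
        have "compact (closure (range w))" using bw by (simp add: compact_closure)
        hence "seq_compact (closure (range w))" by (rule compact_imp_seq_compact)
        then obtain l s where "strict_mono s" "(w \<circ> s) \<longlonglongrightarrow> l"
          unfolding seq_compact_def using closure_subset by blast
        thus ?thesis using that by blast
      qed
      define r' where "r' = r \<circ> s"
      have r': "strict_mono r'" unfolding r'_def using r s by (rule strict_mono_o)
      have hA': "filterlim (\<lambda>m. norm (\<alpha> (r' m) + \<beta> (r' m)) / real (r' m)) at_top sequentially"
        using subseq_at_top[OF hA s] by (simp add: r'_def)
      have hw': "(\<lambda>m. (\<beta> (r' m) - \<alpha> (r' m)) / (\<alpha> (r' m) + \<beta> (r' m))) \<longlonglongrightarrow> \<kappa>"
        using ws by (simp add: r'_def w_def o_def)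
      have wc: "roots_weak_conv (\<lambda>m. p (r' m)) (return borel \<kappa>)" by (rule con[OF r' hA' hw'])
      show ?thesis
      proof (cases "bounded (range fB)")
        case bB: True
        obtain Mb where Mb: "\<And>n. norm (fB n) \<le> Mb" using bB unfolding bounded_iff by auto
        have k0: "\<kappa> = 0"
        proof -
          have nA': "filterlim (\<lambda>m. norm (fA (r' m))) at_top sequentially"
            using subseq_at_top[OF rA s] by (simp add: r'_def)
          have "(\<lambda>m. (\<beta> (r' m) - \<alpha> (r' m)) / (\<alpha> (r' m) + \<beta> (r' m))) \<longlonglongrightarrow> 0"
          proof (rule tendsto_norm_zero_cancel)
            have i0: "(\<lambda>m. inverse (norm (fA (r' m)))) \<longlonglongrightarrow> 0" by (rule tendsto_inverse_0_at_top[OF nA'])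
            have "(\<lambda>m. Mb * inverse (norm (fA (r' m)))) \<longlonglongrightarrow> Mb * 0" by (intro tendsto_intros i0)
            hence up: "(\<lambda>m. Mb * inverse (norm (fA (r' m)))) \<longlonglongrightarrow> 0" by simp
            show "(\<lambda>m. norm ((\<beta> (r' m) - \<alpha> (r' m)) / (\<alpha> (r' m) + \<beta> (r' m)))) \<longlonglongrightarrow> 0"
            proof (rule tendsto_sandwich[OF _ _ tendsto_const up])
              show "eventually (\<lambda>m. 0 \<le> norm ((\<beta> (r' m) - \<alpha> (r' m)) / (\<alpha> (r' m) + \<beta> (r' m)))) sequentially" by simp
              show "eventually (\<lambda>m. norm ((\<beta> (r' m) - \<alpha> (r' m)) / (\<alpha> (r' m) + \<beta> (r' m))) \<le> Mb * inverse (norm (fA (r' m)))) sequentially"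
                using ev_ge1[OF r']
              proof eventually_elim
                case (elim m)
                define n where "n = r' m"
                have n1: "real n \<ge> 1" using elim by (simp add: n_def)
                have "(\<beta> n - \<alpha> n) / (\<alpha> n + \<beta> n) = fB n / fA n" using n1 by (simp add: fA_def fB_def)
                hence "norm ((\<beta> n - \<alpha> n) / (\<alpha> n + \<beta> n)) = norm (fB n) * inverse (norm (fA n))"
                  by (simp add: norm_divide divide_inverse norm_mult norm_inverse)
                also have "\<dots> \<le> Mb * inverse (norm (fA n))" using Mb[of n] by (simp add: mult_right_mono)
                finally show ?case by (simp add: n_def)
              qed
            qed
          qed
          thus ?thesis using hw' LIMSEQ_unique by blast
        qed
        have "roots_weak_conv p (return borel 0)"
          unfolding roots_weak_conv_def
        proof (intro allI impI)
          fix f :: "complex \<Rightarrow> real" assume f: "continuous_on UNIV f \<and> bounded (range f)"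
          have l1: "(\<lambda>n. root_integral (p n) f) \<longlonglongrightarrow> integral\<^sup>L \<mu> f" using mu(2) f unfolding roots_weak_conv_def by blast
          have l2: "(\<lambda>m. root_integral (p (r' m)) f) \<longlonglongrightarrow> integral\<^sup>L (return borel 0) f"
            using wc f k0 unfolding roots_weak_conv_def by blast
          have l3: "(\<lambda>m. root_integral (p (r' m)) f) \<longlonglongrightarrow> integral\<^sup>L \<mu> f"
            using LIMSEQ_subseq_LIMSEQ[OF l1 r'] by (simp add: o_def)
          have "integral\<^sup>L \<mu> f = integral\<^sup>L (return borel 0) f" using LIMSEQ_unique[OF l3 l2] .
          thus "(\<lambda>n. root_integral (p n) f) \<longlonglongrightarrow> integral\<^sup>L (return borel 0) f" using l1 by simp
        qed
        thus ?thesis using nbA bB unfolding fA_def fB_def by blast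
      next
        case nbB: False
        have "\<exists>\<kappa> :: complex. \<exists>r :: nat \<Rightarrow> nat. strict_mono r \<and>
             (\<lambda>m. (\<beta> (r m) - \<alpha> (r m)) / (\<alpha> (r m) + \<beta> (r m))) \<longlonglongrightarrow> \<kappa> \<and>
             roots_weak_conv (\<lambda>m. p (r m)) (return borel \<kappa>)"
          using r' hw' wc by blast
        thus ?thesis using nbA nbB unfolding fA_def fB_def by blast
      qed
    next
      case nbw: False
      obtain s where s: "strict_mono s" and ws: "filterlim (\<lambda>m. norm (w (s m))) at_top sequentially"
        using unbounded_subseq[OF nbw] by blast
      define r' where "r' = r \<circ> s"
      have r': "strict_mono r'" unfolding r'_def using r s by (rule strict_mono_o)
      have nA': "filterlim (\<lambda>m. norm (fA (r' m))) at_top sequentially"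
        using subseq_at_top[OF rA s] by (simp add: r'_def)
      have "filterlim (\<lambda>m. norm (\<beta> (r' m) - \<alpha> (r' m)) / (2 * real (r' m) + norm (\<alpha> (r' m) + \<beta> (r' m)))) at_top sequentially"
        unfolding filterlim_at_top
      proof
        fix Z :: real
        have e1: "eventually (\<lambda>m. 2 * Z \<le> norm (w (s m))) sequentially"
          using ws unfolding filterlim_at_top by blast
        have e2: "eventually (\<lambda>m. 2 \<le> norm (fA (r' m))) sequentially"
          using nA' unfolding filterlim_at_top by blast
        show "eventually (\<lambda>m. Z \<le> norm (\<beta> (r' m) - \<alpha> (r' m)) / (2 * real (r' m) + norm (\<alpha> (r' m) + \<beta> (r' m)))) sequentially"
          using eventually_conj[OF e1 eventually_conj[OF e2 ev_ge1[OF r']]]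
        proof eventually_elim
          case (elim m)
          define n where "n = r' m"
          define A where "A = \<alpha> n + \<beta> n"
          define B where "B = \<beta> n - \<alpha> n"
          have n1: "real n \<ge> 1" using elim by (simp add: n_def)
          have eA: "norm A = real n * norm (fA n)" using n1 by (simp add: A_def fA_def norm_div_nat)
          have A2: "2 * real n \<le> norm A" using eA elim n1 by (simp add: n_def mult_left_mono mult.commute)
          have Ap: "norm A > 0" using A2 n1 by linarith
          have wn: "w (s m) = B / A" by (simp add: w_def B_def A_def n_def r'_def)
          have "norm B / (2 * real n + norm A) \<ge> norm B / (2 * norm A)"
          proof (rule divide_left_mono)
            show "2 * real n + norm A \<le> 2 * norm A" using A2 by simp
            have "0 < 2 * real n + norm A" using Ap n1 by linarith
            thus "0 < 2 * norm A * (2 * real n + norm A)" by (rule mult_pos_pos[rotated]) (use Ap in simp)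
          qed simp
          also have "norm B / (2 * norm A) = norm (w (s m)) / 2" using wn by (simp add: norm_divide)
          finally have "norm (w (s m)) / 2 \<le> norm B / (2 * real n + norm A)" .
          moreover have "Z \<le> norm (w (s m)) / 2" using elim by simp
          ultimately have "Z \<le> norm B / (2 * real n + norm A)" by linarith
          thus ?case by (simp add: n_def A_def B_def)
        qed
      qed
      hence False by (rule esc[OF r'])
      thus ?thesis ..
    qed
  qed
qed


end
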